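(* Let $\Bbbk$ be an algebraically closed field of characteristic zero, $G$ a finite abelian group, $u\in G$ an element of order $2$, and $V$ a finite-dimensional $\Bbbk G$-module with $u\cdot v=-v$ for all $v\in V$, with basis $\{v_1,\dots,v_k\}$ (so $k=\dim V$). Let $\mathcal{A}=\mathcal{A}(V,u,G)$. Then: (1) the family $\{\Bbbk_g: g\in G\}$ is a complete set of representatives of the isomorphism classes of simple left $\mathcal{A}$-comodules; (2) for every $g\in G$, the projective cover of the comodule $\Bbbk_{u^k g}$ is $P_g$; (3) for all $g,h\in G$ there are isomorphisms of left $\mathcal{A}$-comodules $\Bbbk_g\otimes\Bbbk_h\simeq\Bbbk_{gh}$ and $P_g\otimes\Bbbk_h\simeq P_{gh}$.
   Context: The finite supergroup algebra $\mathcal{A}(V,u,G)$ is the Hopf algebra $\wedge(V)\# \Bbbk G$: as an algebra it is generated by the elements of $V$ (linearly) and of $G$, subject to the group relations of $G$ and to $vw+wv=0$ and $gv=(g\cdot v)g$ for $v,w\in V$, $g\in G$; its coproduct, counit and antipode are determined by $\Delta(v)=v\otimes 1+u\otimes v$, $\Delta(g)=g\otimes g$, $\varepsilon(v)=0$, $\varepsilon(g)=1$, $S(v)=-uv$, $S(g)=g^{-1}$. It has basis $\{xg\}$ with $x$ running over a basis of $\wedge(V)$ and $g\in G$. For $g\in G$, $\Bbbk_g$ is the one-dimensional left $\mathcal{A}$-comodule spanned by $w_g$ with coaction $w_g\mapsto g\otimes w_g$. For $g\in G$, $P_g=\wedge(V)g\subseteq\mathcal{A}$ (the span of the elements $xg$,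 $x\in\wedge(V)$), which is a left $\mathcal{A}$-comodule under the restriction of the coproduct $\Delta$. Tensor products of comodules carry the diagonal coaction. *)

theory Defs
  imports Main "HOL-Library.Function_Algebras" "HOL-Library.FuncSet"
    "HOL-Computational_Algebra.Polynomial"
begin

text \<open>
The finite abelian group G is a type 'g of class ab_group_add
(written additively: gh becomes g + h, the unit is 0, u^n g is ((+) u ^^ n) g).
V = k^k with basis v_0,...,v_(k-1); the G-action is given by matrices
act g i j = coefficient of v_i in g . v_j.
A = wedge(V) # kG has basis x_S g  (S a subset of {..<k}, g in G), where
x_S = v_(i1) ... v_(im) for i1 < ... < im.  A basis element is the pair (S, g).
Elements of A are functions (nat set * 'g) => 'k supported on this basis.
\<close>

definition abasis :: "nat \<Rightarrow> (nat set \<times> 'g) set" where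
  "abasis k = {(S, g). S \<subseteq> {..<k}}"

text \<open>Coproduct of A in coordinates: cop_coeff u b c d is the coefficient of
c \<otimes> d in Delta(b).  It is obtained by expanding the product of the
Delta(v_i) = v_i \<otimes> 1 + u \<otimes> v_i over i in S (in increasing order) and
Delta(g) = g \<otimes> g, using u v = - v u:
Delta(x_S g) = sum over disjoint T, R with T \<union> R = S of
   (-1)^#{(i,j). i in R, j in T, i < j}  x_T u^|R| g \<otimes> x_R g.\<close>

definition cop_coeff :: "'g::ab_group_add \<Rightarrow> nat set \<times> 'g \<Rightarrow> nat set \<times> 'g \<Rightarrow> nat set \<times> 'g \<Rightarrow> 'k::comm_ring_1" where
  "cop_coeff u b c d =
     (if fst c \<union> fst d = fst b \<and> fst c \<inter> fst d = {}
         \<and> snd c = ((+) u ^^ card (fst d)) (snd b) \<and> snd d = snd b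
      then (-1) ^ card {(i, j). i \<in> fst d \<and> j \<in> fst c \<and> i < j}
      else 0)"

definition counit_coeff :: "nat set \<times> 'g \<Rightarrow> 'k::comm_ring_1" where
  "counit_coeff b = (if fst b = {} then 1 else 0)"

text \<open>Multiplication of A in coordinates.  g . x_R = sum over Q of
wedge_act act g R Q x_Q (determinant of the R-columns/Q-rows minor of the
matrix of g, as a signed sum over bijections R -> Q), and
x_T x_Q = (-1)^#{(t,q). t in T, q in Q, q < t} x_(T \<union> Q) if T, Q disjoint, else 0.
(x_T g)(x_R h) = x_T (g . x_R) g h.\<close>

definition wedge_act :: "('g \<Rightarrow> nat \<Rightarrow> nat \<Rightarrow> 'k::comm_ring_1) \<Rightarrow> 'g \<Rightarrow> nat set \<Rightarrow> nat set \<Rightarrow> 'k" where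
  "wedge_act act g R Q =
     (\<Sum>\<sigma> \<in> {\<sigma> \<in> R \<rightarrow>\<^sub>E Q. bij_betw \<sigma> R Q}.
        (-1) ^ card {(r, r'). r \<in> R \<and> r' \<in> R \<and> r < r' \<and> \<sigma> r' < \<sigma> r}
        * (\<Prod>r\<in>R. act g (\<sigma> r) r))"

definition mult_coeff :: "('g::ab_group_add \<Rightarrow> nat \<Rightarrow> nat \<Rightarrow> 'k::comm_ring_1)
     \<Rightarrow> nat set \<times> 'g \<Rightarrow> nat set \<times> 'g \<Rightarrow> nat set \<times> 'g \<Rightarrow> 'k" where
  "mult_coeff act b c e =
     (if snd e = snd b + snd c \<and> fst b \<subseteq> fst e
      then (-1) ^ card {(t, q). t \<in> fst b \<and> q \<in> fst e - fst b \<and> q < t}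
           * wedge_act act (snd b) (fst c) (fst e - fst b)
      else 0)"

text \<open>A left A-comodule: a k-vector space (scale, carrier) together with the
coaction m \<mapsto> sum over basis elements b of b \<otimes> coact b m (A is finite
dimensional, so every coaction has this form with coact b linear).\<close>

record ('k, 'm, 'g) comod =
  scl :: "'k \<Rightarrow> 'm \<Rightarrow> 'm"
  car :: "'m set"
  coact :: "nat set \<times> 'g \<Rightarrow> 'm \<Rightarrow> 'm"

definition is_comodule :: "nat \<Rightarrow> 'g::ab_group_add \<Rightarrow> ('k::field, 'm::ab_group_add, 'g) comod \<Rightarrow> bool" where
  "is_comodule k u C \<longleftrightarrow>
     vector_space (scl C) \<and> module.subspace (scl C) (car C) \<and>
     (\<forall>b\<in>abasis k. \<forall>x\<in>car C. coact C b x \<in> car C) \<and>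
     (\<forall>b\<in>abasis k. \<forall>x\<in>car C. \<forall>y\<in>car C. coact C b (x + y) = coact C b x + coact C b y) \<and>
     (\<forall>b\<in>abasis k. \<forall>a. \<forall>x\<in>car C. coact C b (scl C a x) = scl C a (coact C b x)) \<and>
     (\<forall>c\<in>abasis k. \<forall>d\<in>abasis k. \<forall>x\<in>car C.
        coact C d (coact C c x) = (\<Sum>b\<in>abasis k. scl C (cop_coeff u b c d) (coact C b x))) \<and>
     (\<forall>x\<in>car C. (\<Sum>b\<in>abasis k. scl C (counit_coeff b) (coact C b x)) = x)"

definition comod_hom :: "nat \<Rightarrow> ('k::field, 'm::ab_group_add, 'g) comod \<Rightarrow> ('k, 'n::ab_group_add, 'g) comod
     \<Rightarrow> ('m \<Rightarrow> 'n) \<Rightarrow> bool" where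
  "comod_hom k C D f \<longleftrightarrow>
     (\<forall>x\<in>car C. f x \<in> car D) \<and>
     (\<forall>x\<in>car C. \<forall>y\<in>car C. f (x + y) = f x + f y) \<and>
     (\<forall>a. \<forall>x\<in>car C. f (scl C a x) = scl D a (f x)) \<and>
     (\<forall>b\<in>abasis k. \<forall>x\<in>car C. f (coact C b x) = coact D b (f x))"

definition comod_isomorphic :: "nat \<Rightarrow> ('k::field, 'm::ab_group_add, 'g) comod \<Rightarrow> ('k, 'n::ab_group_add, 'g) comod \<Rightarrow> bool" where
  "comod_isomorphic k C D \<longleftrightarrow> (\<exists>f. comod_hom k C D f \<and> bij_betw f (car C) (car D))"

definition subcomodule :: "nat \<Rightarrow> ('k::field, 'm::ab_group_add, 'g) comod \<Rightarrow> 'm set \<Rightarrow> bool" where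
  "subcomodule k C N \<longleftrightarrow>
     module.subspace (scl C) N \<and> N \<subseteq> car C \<and> (\<forall>b\<in>abasis k. \<forall>x\<in>N. coact C b x \<in> N)"

definition simple_comodule :: "nat \<Rightarrow> 'g::ab_group_add \<Rightarrow> ('k::field, 'm::ab_group_add, 'g) comod \<Rightarrow> bool" where
  "simple_comodule k u C \<longleftrightarrow>
     is_comodule k u C \<and> car C \<noteq> {0} \<and> (\<forall>N. subcomodule k C N \<longrightarrow> N = {0} \<or> N = car C)"

text \<open>HOL cannot quantify over
types inside a formula; the comodules M, N range over all comodules whose
underlying spaces live in the types 'c and 'd.  In the main theorem these type
variables are free, hence universally quantified over all types.\<close>

definition comod_projective :: "nat \<Rightarrow> 'g::ab_group_add \<Rightarrow> ('k::field, 'm::ab_group_add, 'g) comod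
     \<Rightarrow> 'c::ab_group_add itself \<Rightarrow> 'd::ab_group_add itself \<Rightarrow> bool" where
  "comod_projective k u P (TC :: 'c itself) (TD :: 'd itself) \<longleftrightarrow>
     is_comodule k u P \<and>
     (\<forall>(M :: ('k, 'c, 'g) comod) (N :: ('k, 'd, 'g) comod) f g.
        is_comodule k u M \<longrightarrow> is_comodule k u N \<longrightarrow>
        comod_hom k M N f \<longrightarrow> f ` car M = car N \<longrightarrow> comod_hom k P N g \<longrightarrow>
        (\<exists>h. comod_hom k P M h \<and> (\<forall>x\<in>car P. f (h x) = g x)))"

definition is_projective_cover :: "nat \<Rightarrow> 'g::ab_group_add \<Rightarrow> ('k::field, 'm::ab_group_add, 'g) comod
     \<Rightarrow> ('k, 'n::ab_group_add, 'g) comod \<Rightarrow> 'c::ab_group_add itself \<Rightarrow> 'd::ab_group_add itself \<Rightarrow> bool" where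
  "is_projective_cover k u P S TC TD \<longleftrightarrow>
     comod_projective k u P TC TD \<and> is_comodule k u S \<and>
     (\<exists>\<pi>. comod_hom k P S \<pi> \<and> \<pi> ` car P = car S \<and>
          (\<forall>N. subcomodule k P N \<and> \<pi> ` N = car S \<longrightarrow> N = car P))"

definition fspace :: "'i set \<Rightarrow> ('i \<Rightarrow> 'k::zero) set" where
  "fspace I = {f. \<forall>x. x \<notin> I \<longrightarrow> f x = 0}"

definition fscale :: "'k::times \<Rightarrow> ('i \<Rightarrow> 'k) \<Rightarrow> ('i \<Rightarrow> 'k)" where
  "fscale a f = (\<lambda>x. a * f x)"

definition indic :: "'i \<Rightarrow> 'i \<Rightarrow> 'k::zero_neq_one" where
  "indic i = (\<lambda>j. if j = i then 1 else 0)"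

text \<open>The one-dimensional comodule k_g: spanned by w_g (here the function
() \<mapsto> 1), coaction w_g \<mapsto> g \<otimes> w_g.\<close>

definition kg :: "'g \<Rightarrow> ('k::field, unit \<Rightarrow> 'k, 'g) comod" where
  "kg g = \<lparr>scl = fscale, car = fspace UNIV,
           coact = (\<lambda>b w. if b = ({}, g) then w else 0)\<rparr>"

text \<open>P_g = wedge(V) g \<subseteq> A with coaction the restriction of Delta.\<close>

definition Pg :: "nat \<Rightarrow> 'g::ab_group_add \<Rightarrow> 'g \<Rightarrow> ('k::field, nat set \<times> 'g \<Rightarrow> 'k, 'g) comod" where
  "Pg k u g = \<lparr>scl = fscale, car = fspace {(S, h). S \<subseteq> {..<k} \<and> h = g},
     coact = (\<lambda>c a. (\<lambda>d. \<Sum>b\<in>abasis k. a b * cop_coeff u b c d))\<rparr>"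

text \<open>Tensor product of two coordinate comodules (underlying spaces fspace I,
fspace J with I, J finite), underlying space fspace (I \<times> J) = fspace I \<otimes> fspace J,
with the diagonal coaction m \<otimes> n \<mapsto> m_(-1) n_(-1) \<otimes> m_0 \<otimes> n_0.\<close>

definition comod_tensor :: "nat \<Rightarrow> ('g::ab_group_add \<Rightarrow> nat \<Rightarrow> nat \<Rightarrow> 'k::field)
     \<Rightarrow> 'i set \<Rightarrow> ('k, 'i \<Rightarrow> 'k, 'g) comod \<Rightarrow> 'j set \<Rightarrow> ('k, 'j \<Rightarrow> 'k, 'g) comod
     \<Rightarrow> ('k, 'i \<times> 'j \<Rightarrow> 'k, 'g) comod" where
  "comod_tensor k act I M J N =
     \<lparr>scl = fscale, car = fspace (I \<times> J),
      coact = (\<lambda>e F. (\<lambda>(i, j). \<Sum>b\<in>abasis k. \<Sum>c\<in>abasis k. mult_coeff act b c e *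
                 (\<Sum>p\<in>I \<times> J. F p * coact M b (indic (fst p)) i * coact N c (indic (snd p)) j)))\<rparr>"

end

theory Submission
  imports Defs
begin

lemma sum_fun_apply: "(\<Sum>b\<in>A. f b) x = (\<Sum>b\<in>A. f b x)"
  by (induct A rule: infinite_finite_induct) auto

lemma sum_single:
  assumes "finite A" "\<And>x. x\<in>A \<Longrightarrow> x \<noteq> a \<Longrightarrow> f x = 0"
  shows "sum f A = (if a \<in> A then f a else 0)"
proof (cases "a \<in> A")
  case True
  then have "sum f A = f a + sum f (A - {a})" using assms(1) by (simp add: sum.remove)
  also have "sum f (A - {a}) = 0" using assms(2) by (intro sum.neutral) auto
  finally show ?thesis using True by simp
next
  case False
  then show ?thesis using assms(2) by (auto intro!: sum.neutral)
qed

lemma abasis_eq: "abasis k = Pow {..<k} \<times> UNIV"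
  by (auto simp: abasis_def)

lemma finite_abasis[simp]: "finite (abasis k :: (nat set \<times> 'g::finite) set)"
  by (simp add: abasis_eq)

lemma mem_abasis[simp]: "(S, g) \<in> abasis k \<longleftrightarrow> S \<subseteq> {..<k}"
  by (simp add: abasis_def)

lemma upow_0: "((+) u ^^ n) (g::'g::ab_group_add) = ((+) u ^^ n) 0 + g"
  by (induct n) (auto simp: add.assoc)

lemma upow_add: "((+) u ^^ (m+n)) (0::'g::ab_group_add) = ((+) u ^^ m) 0 + ((+) u ^^ n) 0"
  by (simp add: funpow_add upow_0[where u=u and n=m and g="((+) u ^^ n) 0"])

definition sg :: "nat set \<Rightarrow> nat set \<Rightarrow> 'k::comm_ring_1" where
  "sg A B = (-1) ^ card {(i, j). i \<in> A \<and> j \<in> B \<and> i < j}"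

lemma cop_sg: "cop_coeff u b c d =
     (if fst c \<union> fst d = fst b \<and> fst c \<inter> fst d = {}
         \<and> snd c = ((+) u ^^ card (fst d)) (snd b) \<and> snd d = snd b
      then sg (fst d) (fst c) else 0)"
  by (simp add: cop_coeff_def sg_def)

lemma cop_zero: "\<not> (fst c \<union> fst d = fst b \<and> fst c \<inter> fst d = {} \<and> snd c = ((+) u ^^ card (fst d)) (snd b) \<and> snd d = snd b) \<Longrightarrow> cop_coeff u b c d = 0"
  unfolding cop_coeff_def by (rule if_not_P)

lemma cop_val: "fst c \<union> fst d = fst b \<and> fst c \<inter> fst d = {} \<and> snd c = ((+) u ^^ card (fst d)) (snd b) \<and> snd d = snd b \<Longrightarrow> cop_coeff u b c d = sg (fst d) (fst c)"
  unfolding cop_sg by (rule if_P)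

lemma sg_Un_left:
  assumes "finite A" "finite B" "finite C" "A \<inter> B = {}"
  shows "sg (A \<union> B) C = (sg A C * sg B C :: 'k::comm_ring_1)"
proof -
  have "{(i, j). i \<in> A \<union> B \<and> j \<in> C \<and> i < j} = {(i, j). i \<in> A \<and> j \<in> C \<and> i < j} \<union> {(i, j). i \<in> B \<and> j \<in> C \<and> i < j}"
    by auto
  moreover have "finite {(i, j). i \<in> A \<and> j \<in> C \<and> i < j}"
    by (rule finite_subset[of _ "A \<times> C"]) (use assms in auto)
  moreover have "finite {(i, j). i \<in> B \<and> j \<in> C \<and> i < j}"
    by (rule finite_subset[of _ "B \<times> C"]) (use assms in auto)
  ultimately show ?thesis using assms(4) unfolding sg_def
    by (simp only:) (subst card_Un_disjoint, auto simp: power_add)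
qed

lemma sg_Un_right:
  assumes "finite A" "finite B" "finite C" "B \<inter> C = {}"
  shows "sg A (B \<union> C) = (sg A B * sg A C :: 'k::comm_ring_1)"
proof -
  have "{(i, j). i \<in> A \<and> j \<in> B \<union> C \<and> i < j} = {(i, j). i \<in> A \<and> j \<in> B \<and> i < j} \<union> {(i, j). i \<in> A \<and> j \<in> C \<and> i < j}"
    by auto
  moreover have "finite {(i, j). i \<in> A \<and> j \<in> B \<and> i < j}"
    by (rule finite_subset[of _ "A \<times> B"]) (use assms in auto)
  moreover have "finite {(i, j). i \<in> A \<and> j \<in> C \<and> i < j}"
    by (rule finite_subset[of _ "A \<times> C"]) (use assms in auto)
  ultimately show ?thesis using assms(4) unfolding sg_def
    by (simp only:) (subst card_Un_disjoint, auto simp: power_add)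
qed

lemma sg_sq: "sg A B * sg A B = (1::'k::comm_ring_1)"
  by (simp add: sg_def flip: power_add)

lemma sg_empty[simp]: "sg {} B = 1" "sg A {} = 1"
  by (simp_all add: sg_def)

lemma cop_coassoc:
  fixes u :: "'g::{finite,ab_group_add}"
  assumes b0: "b0 \<in> abasis k" and c: "c \<in> abasis k" and d: "d \<in> abasis k"
  shows "(\<Sum>b'\<in>abasis k. cop_coeff u b0 c b' * cop_coeff u b' d e)
       = (\<Sum>b\<in>abasis k. cop_coeff u b c d * (cop_coeff u b0 b e :: 'k::comm_ring_1))"
proof -
  obtain S g0 where B0: "b0 = (S, g0)" by fastforce
  obtain C gc where Cc: "c = (C, gc)" by fastforce
  obtain D gd where Dd: "d = (D, gd)" by fastforce
  obtain E ge where Ee: "e = (E, ge)" by fastforce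
  have S: "S \<subseteq> {..<k}" "C \<subseteq> {..<k}" "D \<subseteq> {..<k}" using b0 c d B0 Cc Dd by auto
  have fin: "finite S" "finite C" "finite D" using S finite_subset by blast+
  have L: "(\<Sum>b'\<in>abasis k. cop_coeff u b0 c b' * cop_coeff u b' d e)
     = (if (D \<union> E, ge) \<in> abasis k then cop_coeff u b0 c (D \<union> E, ge) * cop_coeff u (D \<union> E, ge) d e else 0)"
    by (rule sum_single) (auto simp: cop_sg Dd Ee)
  have R: "(\<Sum>b\<in>abasis k. cop_coeff u b c d * (cop_coeff u b0 b e :: 'k))
     = (if (C \<union> D, gd) \<in> abasis k then cop_coeff u (C \<union> D, gd) c d * cop_coeff u b0 (C \<union> D, gd) e else 0)"
    by (rule sum_single) (auto simp: cop_sg Cc Dd)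
  show ?thesis
  proof (cases "C \<union> D \<union> E = S \<and> C \<inter> D = {} \<and> C \<inter> E = {} \<and> D \<inter> E = {} \<and> ge = g0
       \<and> gd = ((+) u ^^ card E) g0 \<and> gc = ((+) u ^^ (card D + card E)) g0")
    case True
    then have E: "E \<subseteq> {..<k}" "finite E" using S finite_subset by blast+
    have cDE: "card (D \<union> E) = card D + card E" using True fin E by (simp add: card_Un_disjoint)
    have u1: "((+) u ^^ card D) (((+) u ^^ card E) g0) = ((+) u ^^ (card D + card E)) g0"
      by (simp add: funpow_add)
    have "(D \<union> E) \<inter> C = {}" "C \<union> (D \<union> E) = S" "C \<union> D \<union> E = S" "(C \<union> D) \<inter> E = {}" using True by auto
    then have LL: "(\<Sum>b'\<in>abasis k. cop_coeff u b0 c b' * cop_coeff u b' d e) = sg (D \<union> E) C * sg E D"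
      using L True S E cDE unfolding B0 Cc Dd Ee by (auto simp: cop_sg Int_commute)
    have RR: "(\<Sum>b\<in>abasis k. cop_coeff u b c d * (cop_coeff u b0 b e :: 'k)) = sg D C * sg E (C \<union> D)"
      using R True S E u1 \<open>(C \<union> D) \<inter> E = {}\<close> \<open>C \<union> D \<union> E = S\<close> unfolding B0 Cc Dd Ee
      by (auto simp: cop_sg)
    show ?thesis unfolding LL RR using True fin E
      by (simp add: sg_Un_left sg_Un_right)
  next
    case False
    have "(\<Sum>b'\<in>abasis k. cop_coeff u b0 c b' * cop_coeff u b' d e) = (0::'k)"
    proof -
      { assume ne: "cop_coeff u b0 c (D \<union> E, ge) * cop_coeff u (D \<union> E, ge) d e \<noteq> (0::'k)"
        then have h1: "C \<union> (D \<union> E) = S" "C \<inter> (D \<union> E) = {}" "gc = ((+) u ^^ card (D \<union> E)) g0" "ge = g0"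
             "D \<union> E = D \<union> E" "D \<inter> E = {}" "gd = ((+) u ^^ card E) ge"
          unfolding B0 Cc Dd Ee by (auto simp: cop_sg split: if_splits)
        have "finite E" using h1 fin finite_subset by blast
        then have "card (D \<union> E) = card D + card E" using h1 fin by (simp add: card_Un_disjoint)
        then have False using False h1 by auto }
      then have "cop_coeff u b0 c (D \<union> E, ge) * cop_coeff u (D \<union> E, ge) d e = (0::'k)" by blast
      then show ?thesis unfolding L by (simp only: if_cancel)
    qed
    moreover have "(\<Sum>b\<in>abasis k. cop_coeff u b c d * (cop_coeff u b0 b e :: 'k)) = 0"
    proof -
      { assume ne: "cop_coeff u (C \<union> D, gd) c d * cop_coeff u b0 (C \<union> D, gd) e \<noteq> (0::'k)"
        then have h1: "C \<inter> D = {}" "gc = ((+) u ^^ card D) gd" "C \<union> D \<union> E = S" "(C \<union> D) \<inter> E = {}"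
             "gd = ((+) u ^^ card E) g0" "ge = g0"
          unfolding B0 Cc Dd Ee by (auto simp: cop_sg split: if_splits)
        then have False using False by (auto simp: funpow_add) }
      then have "cop_coeff u (C \<union> D, gd) c d * cop_coeff u b0 (C \<union> D, gd) e = (0::'k)" by blast
      then show ?thesis unfolding R by (simp only: if_cancel)
    qed
    ultimately show ?thesis by simp
  qed
qed

lemma vs_fscale: "vector_space (fscale :: 'k::field \<Rightarrow> ('i \<Rightarrow> 'k) \<Rightarrow> _)"
  by unfold_locales (auto simp: fscale_def fun_eq_iff algebra_simps)

lemma mod_fscale: "module (fscale :: 'k::field \<Rightarrow> ('i \<Rightarrow> 'k) \<Rightarrow> _)"
  using vs_fscale module_iff_vector_space by blast

lemma subspace_fspace: "module.subspace (fscale :: 'k::field \<Rightarrow> ('i \<Rightarrow> 'k) \<Rightarrow> _) (fspace I)"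
  by (auto simp: module.subspace_def[OF mod_fscale] fspace_def fscale_def)

lemma fspace_UNIV[simp]: "fspace UNIV = UNIV"
  by (auto simp: fspace_def)

lemma kg_comodule:
  fixes u :: "'g::{finite,ab_group_add}"
  shows "is_comodule k u (kg g :: ('k::field, unit \<Rightarrow> 'k, 'g) comod)"
proof -
  have cop: "\<And>c d :: nat set \<times> 'g. c \<in> abasis k \<Longrightarrow> d \<in> abasis k \<Longrightarrow>
      (\<Sum>b\<in>abasis k. fscale (cop_coeff u b c d) (if b = ({}, g) then x else 0))
      = (if d = ({}, g) then if c = ({}, g) then x else 0 else (0 :: unit \<Rightarrow> 'k))" for x
  proof -
    fix c d :: "nat set \<times> 'g" assume c: "c \<in> abasis k" and d: "d \<in> abasis k"
    have "(\<Sum>b\<in>abasis k. fscale (cop_coeff u b c d) (if b = ({}, g) then x else 0))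
        = fscale (cop_coeff u ({}, g) c d) x"
      by (subst sum_single[where a="({}, g)"]) (auto simp: fscale_def)
    also have "\<dots> = (if d = ({}, g) then if c = ({}, g) then x else 0 else 0)"
      by (cases c; cases d) (auto simp: cop_sg fscale_def fun_eq_iff)
    finally show "?thesis c d" .
  qed
  have cnt: "(\<Sum>b\<in>abasis k. fscale (counit_coeff b) (if b = ({}, g) then x else 0)) = x" for x :: "unit \<Rightarrow> 'k"
    by (subst sum_single[where a="({}, g)"]) (auto simp: fscale_def counit_coeff_def)
  show ?thesis
    unfolding is_comodule_def kg_def using vs_fscale subspace_fspace[of UNIV] cop cnt
    by (auto simp: fscale_def fun_eq_iff)
qed

definition Pset :: "nat \<Rightarrow> 'g \<Rightarrow> (nat set \<times> 'g) set" where
  "Pset k g = {(S, h). S \<subseteq> {..<k} \<and> h = g}"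

lemma Pset_abasis: "Pset k g \<subseteq> abasis k"
  by (auto simp: Pset_def)

lemma car_Pg: "car (Pg k u g) = fspace (Pset k g)"
  by (simp add: Pg_def Pset_def)

lemma coact_Pg: "coact (Pg k u g) c a d = (\<Sum>b\<in>abasis k. a b * cop_coeff u b c d)"
  by (simp add: Pg_def)

lemma scl_Pg: "scl (Pg k u g) = fscale"
  by (simp add: Pg_def)

lemma Pg_comodule:
  fixes u :: "'g::{finite,ab_group_add}"
  shows "is_comodule k u (Pg k u g :: ('k::field, nat set \<times> 'g \<Rightarrow> 'k, 'g) comod)"
  unfolding is_comodule_def
proof (intro conjI ballI allI)
  show "vector_space (scl (Pg k u g :: ('k, nat set \<times> 'g \<Rightarrow> 'k, 'g) comod))" by (simp add: scl_Pg vs_fscale)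
  show "module.subspace (scl (Pg k u g :: ('k, nat set \<times> 'g \<Rightarrow> 'k, 'g) comod)) (car (Pg k u g :: ('k, nat set \<times> 'g \<Rightarrow> 'k, 'g) comod))"
    by (simp add: scl_Pg car_Pg subspace_fspace)
next
  fix b :: "nat set \<times> 'g" and x :: "nat set \<times> 'g \<Rightarrow> 'k"
  assume b: "b \<in> abasis k" and x: "x \<in> car (Pg k u g)"
  show "coact (Pg k u g) b x \<in> car (Pg k u g)"
    unfolding car_Pg fspace_def coact_Pg
  proof (intro CollectI allI impI sum.neutral ballI)
    fix d b0 :: "nat set \<times> 'g" assume d: "d \<notin> Pset k g" and b0: "b0 \<in> abasis k"
    show "x b0 * cop_coeff u b0 b d = 0"
    proof (cases "b0 \<in> Pset k g")
      case True
      then show ?thesis using d b0 by (cases b0; cases d) (auto simp: cop_sg Pset_def)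
    next
      case False
      have "x \<in> {f. \<forall>x. x \<notin> Pset k g \<longrightarrow> f x = 0}" using x by (simp add: car_Pg fspace_def)
      then have "x b0 = 0" using False unfolding mem_Collect_eq by (cases b0) simp
      then show ?thesis by simp
    qed
  qed
next
  fix b :: "nat set \<times> 'g" and x y :: "nat set \<times> 'g \<Rightarrow> 'k"
  show "coact (Pg k u g) b (x + y) = coact (Pg k u g) b x + coact (Pg k u g) b y"
    by (simp add: coact_Pg fun_eq_iff distrib_right sum.distrib)
next
  fix b :: "nat set \<times> 'g" and a and x :: "nat set \<times> 'g \<Rightarrow> 'k"
  show "coact (Pg k u g) b (scl (Pg k u g) a x) = scl (Pg k u g) a (coact (Pg k u g) b x)"
    by (simp add: coact_Pg scl_Pg fun_eq_iff fscale_def sum_distrib_left mult.assoc)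
next
  fix c d :: "nat set \<times> 'g" and x :: "nat set \<times> 'g \<Rightarrow> 'k"
  assume c: "c \<in> abasis k" and d: "d \<in> abasis k"
  show "coact (Pg k u g) d (coact (Pg k u g) c x) =
       (\<Sum>b\<in>abasis k. scl (Pg k u g) (cop_coeff u b c d) (coact (Pg k u g) b x))"
  proof (rule ext)
    fix e :: "nat set \<times> 'g"
    have "coact (Pg k u g) d (coact (Pg k u g) c x) e
        = (\<Sum>b'\<in>abasis k. (\<Sum>b0\<in>abasis k. x b0 * cop_coeff u b0 c b') * cop_coeff u b' d e)"
      by (simp only: coact_Pg)
    also have "\<dots> = (\<Sum>b0\<in>abasis k. x b0 * (\<Sum>b'\<in>abasis k. cop_coeff u b0 c b' * cop_coeff u b' d e))"
      by (simp add: sum_distrib_left sum_distrib_right mult.assoc) (rule sum.swap)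
    also have "\<dots> = (\<Sum>b0\<in>abasis k. x b0 * (\<Sum>b\<in>abasis k. cop_coeff u b c d * cop_coeff u b0 b e))"
      by (intro sum.cong refl, subst cop_coassoc) (use c d in auto)
    also have "\<dots> = (\<Sum>b\<in>abasis k. cop_coeff u b c d * (\<Sum>b0\<in>abasis k. x b0 * cop_coeff u b0 b e))"
      by (simp add: sum_distrib_left sum_distrib_right mult.assoc mult.left_commute) (rule sum.swap)
    also have "\<dots> = (\<Sum>b\<in>abasis k. scl (Pg k u g) (cop_coeff u b c d) (coact (Pg k u g) b x)) e"
      by (simp add: sum_fun_apply scl_Pg fscale_def coact_Pg)
    finally show "coact (Pg k u g) d (coact (Pg k u g) c x) e =
       (\<Sum>b\<in>abasis k. scl (Pg k u g) (cop_coeff u b c d) (coact (Pg k u g) b x)) e" .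
  qed
next
  fix x :: "nat set \<times> 'g \<Rightarrow> 'k"
  assume x: "x \<in> car (Pg k u g)"
  show "(\<Sum>b\<in>abasis k. scl (Pg k u g) (counit_coeff b) (coact (Pg k u g) b x)) = x"
  proof (rule ext)
    fix e :: "nat set \<times> 'g"
    have inner: "(\<Sum>b\<in>abasis k. counit_coeff b * cop_coeff u b0 b e) = (if e = b0 then 1 else (0::'k))"
      if b0: "b0 \<in> abasis k" for b0
    proof -
      obtain S g0 where B0: "b0 = (S, g0)" by fastforce
      have "(\<Sum>b\<in>abasis k. counit_coeff b * cop_coeff u b0 b e)
           = (if ({}, ((+) u ^^ card S) g0) \<in> abasis k then counit_coeff ({}, ((+) u ^^ card S) g0) * cop_coeff u b0 ({}, ((+) u ^^ card S) g0) e else (0::'k))"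
      proof (rule sum_single)
        fix b :: "nat set \<times> 'g" assume "b \<in> abasis k" "b \<noteq> ({}, ((+) u ^^ card S) g0)"
        then show "counit_coeff b * cop_coeff u b0 b e = (0::'k)"
          by (cases b; cases e) (clarsimp simp: counit_coeff_def cop_sg B0)
      qed simp
      also have "\<dots> = (if e = b0 then 1 else 0)"
      proof -
        obtain a b where Ee: "e = (a, b)" by fastforce
        show ?thesis
        proof (cases "a = S \<and> b = g0")
          case True
          then have "cop_coeff u b0 ({}, ((+) u ^^ card S) g0) e = (1::'k)"
            by (simp add: cop_coeff_def B0 Ee)
          moreover have "e = b0" using True B0 Ee by simp
          moreover have "counit_coeff ({}, ((+) u ^^ card S) g0) = (1::'k)" by (simp add: counit_coeff_def)
          moreover have "({}, ((+) u ^^ card S) g0) \<in> abasis k" by simp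
          ultimately show ?thesis by (simp only: if_True mult_1 simp_thms)
        next
          case False
          have "cop_coeff u b0 ({}, ((+) u ^^ card S) g0) e = (0::'k)"
            unfolding B0 Ee by (rule cop_zero) (use False in auto)
          then show ?thesis using False by (simp add: B0 Ee)
        qed
      qed
      finally show ?thesis .
    qed
    have "(\<Sum>b\<in>abasis k. scl (Pg k u g) (counit_coeff b) (coact (Pg k u g) b x)) e
        = (\<Sum>b\<in>abasis k. counit_coeff b * (\<Sum>b0\<in>abasis k. x b0 * cop_coeff u b0 b e))"
      by (simp add: sum_fun_apply scl_Pg fscale_def coact_Pg)
    also have "\<dots> = (\<Sum>b0\<in>abasis k. x b0 * (\<Sum>b\<in>abasis k. counit_coeff b * cop_coeff u b0 b e))"
      by (simp add: sum_distrib_left sum_distrib_right mult.assoc mult.left_commute) (rule sum.swap)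
    also have "\<dots> = (\<Sum>b0\<in>abasis k. x b0 * (if e = b0 then 1 else 0))"
      by (intro sum.cong refl) (simp add: inner)
    also have "\<dots> = x e"
    proof -
      have S1: "(\<Sum>b0\<in>abasis k. x b0 * (if e = b0 then 1 else 0)) = (if e \<in> abasis k then x e else 0)"
        by (subst sum_single[where a=e]) (simp_all)
      have E0: "e \<notin> abasis k \<Longrightarrow> x e = 0"
      proof -
        assume "e \<notin> abasis k"
        then have "e \<notin> Pset k g" using Pset_abasis[of k g] by blast
        moreover have "x \<in> {f. \<forall>x. x \<notin> Pset k g \<longrightarrow> f x = 0}" using x by (simp add: car_Pg fspace_def)
        ultimately show "x e = 0" unfolding mem_Collect_eq by (cases e) simp
      qed
      show ?thesis
      proof (cases "e \<in> abasis k")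
        case True
        then show ?thesis using S1 by simp
      next
        case False
        then show ?thesis using S1 E0 by simp
      qed
    qed
    finally show "(\<Sum>b\<in>abasis k. scl (Pg k u g) (counit_coeff b) (coact (Pg k u g) b x)) e = x e" .
  qed
qed

lemma sum_nonzero: "sum f A \<noteq> 0 \<Longrightarrow> \<exists>a\<in>A. f a \<noteq> 0"
  by (meson sum.neutral)

locale comodctx =
  fixes k :: nat and u :: "'g::{finite,ab_group_add}" and C :: "('k::field, 'm::ab_group_add, 'g) comod"
  assumes cm: "is_comodule k u C"
begin

lemma vs: "vector_space (scl C)" using cm by (simp add: is_comodule_def)

sublocale V: vector_space "scl C" by (rule vs)

lemma sub: "V.subspace (car C)" using cm by (simp add: is_comodule_def)

lemma car0: "0 \<in> car C" by (rule V.subspace_0[OF sub])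
lemma car_add: "x \<in> car C \<Longrightarrow> y \<in> car C \<Longrightarrow> x + y \<in> car C" by (rule V.subspace_add[OF sub])
lemma car_scl: "x \<in> car C \<Longrightarrow> scl C a x \<in> car C" by (rule V.subspace_scale[OF sub])
lemma car_sum: "(\<And>i. i \<in> I \<Longrightarrow> f i \<in> car C) \<Longrightarrow> sum f I \<in> car C" by (rule V.subspace_sum[OF sub])
lemma car_diff: "x \<in> car C \<Longrightarrow> y \<in> car C \<Longrightarrow> x - y \<in> car C" by (rule V.subspace_diff[OF sub])

lemma coact_car: "b \<in> abasis k \<Longrightarrow> x \<in> car C \<Longrightarrow> coact C b x \<in> car C" using cm by (simp add: is_comodule_def)
lemma coact_add: "b \<in> abasis k \<Longrightarrow> x \<in> car C \<Longrightarrow> y \<in> car C \<Longrightarrow> coact C b (x + y) = coact C b x + coact C b y"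
  using cm by (simp add: is_comodule_def)
lemma coact_scl: "b \<in> abasis k \<Longrightarrow> x \<in> car C \<Longrightarrow> coact C b (scl C a x) = scl C a (coact C b x)"
  using cm by (simp add: is_comodule_def)
lemma coassoc: "c \<in> abasis k \<Longrightarrow> d \<in> abasis k \<Longrightarrow> x \<in> car C \<Longrightarrow>
   coact C d (coact C c x) = (\<Sum>b\<in>abasis k. scl C (cop_coeff u b c d) (coact C b x))"
  using cm by (simp add: is_comodule_def)
lemma counit: "x \<in> car C \<Longrightarrow> (\<Sum>b\<in>abasis k. scl C (counit_coeff b) (coact C b x)) = x"
  using cm by (simp add: is_comodule_def)

lemma coact_0: "b \<in> abasis k \<Longrightarrow> coact C b 0 = 0"
  using coact_add[of b 0 0] car0 by simp

lemma coact_sum: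
  assumes "b \<in> abasis k" "finite I" "\<And>i. i \<in> I \<Longrightarrow> f i \<in> car C"
  shows "coact C b (sum f I) = (\<Sum>i\<in>I. coact C b (f i))"
  using assms(2,3)
proof (induct I rule: finite_induct)
  case empty then show ?case by (simp add: coact_0 assms(1))
next
  case (insert i I)
  then show ?case by (simp add: coact_add car_sum assms(1))
qed


lemma exists_primitive_aux:
  "c \<in> abasis k \<Longrightarrow> x \<in> car C \<Longrightarrow> coact C c x \<noteq> 0 \<Longrightarrow>
    \<exists>y\<in>car C. y \<noteq> 0 \<and> (\<forall>b\<in>abasis k. fst b \<noteq> {} \<longrightarrow> coact C b y = 0)"
proof (induct "k - card (fst c)" arbitrary: c x rule: less_induct)
  case less
  show ?case
  proof (cases "\<forall>b\<in>abasis k. fst b \<noteq> {} \<longrightarrow> coact C b (coact C c x) = 0")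
    case True
    moreover have "coact C c x \<in> car C" using less.prems coact_car by blast
    ultimately show ?thesis using less.prems(3) by blast
  next
    case False
    then obtain d where d: "d \<in> abasis k" "fst d \<noteq> {}" "coact C d (coact C c x) \<noteq> 0" by blast
    then have "(\<Sum>b\<in>abasis k. scl C (cop_coeff u b c d) (coact C b x)) \<noteq> 0"
      using coassoc less.prems by simp
    then obtain b where b: "b \<in> abasis k" "scl C (cop_coeff u b c d) (coact C b x) \<noteq> 0"
      using sum_nonzero by blast
    then have cb: "cop_coeff u b c d \<noteq> (0::'k)" and nb: "coact C b x \<noteq> 0" by auto
    from cb have un: "fst c \<union> fst d = fst b" "fst c \<inter> fst d = {}"
      by (metis cop_zero)+
    have sub3: "fst c \<subseteq> {..<k}" "fst d \<subseteq> {..<k}" "fst b \<subseteq> {..<k}"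
      using less.prems(1) d(1) b(1) by (auto simp: abasis_def)
    then have fin: "finite (fst c)" "finite (fst d)" "fst b \<subseteq> {..<k}"
      using finite_subset by blast+
    have "card (fst b) = card (fst c) + card (fst d)" using un fin by (metis card_Un_disjoint)
    moreover have "card (fst d) > 0" using fin d(2) by auto
    moreover have "card (fst b) \<le> k" using fin(3) by (metis card_lessThan card_mono finite_lessThan)
    ultimately have "k - card (fst b) < k - card (fst c)" by linarith
    then show ?thesis using less.hyps[of b x] b(1) nb less.prems(2) by blast
  qed
qed

lemma exists_primitive:
  assumes "x \<in> car C" "x \<noteq> 0"
  shows "\<exists>y\<in>car C. y \<noteq> 0 \<and> (\<forall>b\<in>abasis k. fst b \<noteq> {} \<longrightarrow> coact C b y = 0)"
proof -
  have "(\<Sum>b\<in>abasis k. scl C (counit_coeff b) (coact C b x)) \<noteq> 0" using counit assms by simp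
  then obtain b where "b \<in> abasis k" "scl C (counit_coeff b) (coact C b x) \<noteq> 0" using sum_nonzero by blast
  then show ?thesis using exists_primitive_aux assms by auto
qed

lemma cop_gl: "cop_coeff u ({}, h) ({}, g) ({}, h) = (if g = h then 1 else (0::'k))"
proof (cases "g = h")
  case True then show ?thesis by (subst cop_val) auto
next
  case False then show ?thesis by (subst cop_zero) auto
qed

lemma exists_grouplike:
  assumes "x \<in> car C" "x \<noteq> 0"
  shows "\<exists>g z. z \<in> car C \<and> z \<noteq> 0 \<and> (\<forall>b\<in>abasis k. coact C b z = (if b = ({}, g) then z else 0))"
proof -
  obtain y where y: "y \<in> car C" "y \<noteq> 0" "\<And>b. b\<in>abasis k \<Longrightarrow> fst b \<noteq> {} \<Longrightarrow> coact C b y = 0"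
    using exists_primitive[OF assms] by blast
  have "(\<Sum>b\<in>abasis k. scl C (counit_coeff b) (coact C b y)) \<noteq> 0" using counit y by simp
  then obtain b where b: "b \<in> abasis k" "scl C (counit_coeff b) (coact C b y) \<noteq> 0" using sum_nonzero by blast
  then have "counit_coeff b \<noteq> (0::'k)" "coact C b y \<noteq> 0" by auto
  then obtain g where bg: "b = ({}, g)" by (cases b) (auto simp: counit_coeff_def split: if_splits)
  define z where "z = coact C ({}, g) y"
  have zc: "z \<in> car C" unfolding z_def using coact_car b(1) y(1) bg by blast
  have z0: "z \<noteq> 0" unfolding z_def using \<open>coact C b y \<noteq> 0\<close> bg by simp
  have "coact C b' z = (if b' = ({}, g) then z else 0)" if b': "b' \<in> abasis k" for b'
  proof -
    have g0: "({}, g) \<in> abasis k" by simp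
    have "coact C b' z = (\<Sum>b''\<in>abasis k. scl C (cop_coeff u b'' ({}, g) b') (coact C b'' y))"
      unfolding z_def using coassoc[OF g0 b' y(1)] .
    also have "\<dots> = scl C (cop_coeff u b' ({}, g) b') (coact C b' y)"
    proof (subst sum_single[where a=b'])
      show "finite (abasis k :: (nat set \<times> 'g) set)" by simp
      fix b'' assume "b'' \<in> abasis k" "b'' \<noteq> b'"
      then have "cop_coeff u b'' ({}, g) b' = (0::'k)"
        by (intro cop_zero) (cases b''; cases b'; auto)
      then show "scl C (cop_coeff u b'' ({}, g) b') (coact C b'' y) = 0" by simp
    qed (use b' in simp)
    also have "\<dots> = (if b' = ({}, g) then z else 0)"
    proof (cases "fst b' = {}")
      case True
      then obtain h where h: "b' = ({}, h)" by (cases b') auto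
      show ?thesis unfolding h cop_gl z_def by auto
    next
      case False
      then show ?thesis using y(3)[OF b'] by auto
    qed
    finally show ?thesis .
  qed
  then show ?thesis using zc z0 by blast
qed

lemma simple_iso:
  assumes sim: "simple_comodule k u C"
  shows "\<exists>g. comod_isomorphic k C (kg g :: ('k, unit \<Rightarrow> 'k, 'g) comod)"
proof -
  from sim have "car C \<noteq> {0}" by (simp add: simple_comodule_def)
  then obtain x where x: "x \<in> car C" "x \<noteq> 0" using car0 by blast
  obtain g z where z: "z \<in> car C" "z \<noteq> 0" and cz: "\<And>b. b\<in>abasis k \<Longrightarrow> coact C b z = (if b = ({}, g) then z else 0)"
    using exists_grouplike[OF x] by blast
  define N where "N = range (\<lambda>a. scl C a z)"
  have subN: "subcomodule k C N"
    unfolding subcomodule_def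
  proof (intro conjI ballI)
    show "V.subspace N" unfolding V.subspace_def N_def
    proof (intro conjI ballI allI)
      show "0 \<in> range (\<lambda>a. scl C a z)" by (rule range_eqI[where x=0]) simp
      fix x y assume "x \<in> range (\<lambda>a. scl C a z)" "y \<in> range (\<lambda>a. scl C a z)"
      then obtain a b where "x = scl C a z" "y = scl C b z" by blast
      then show "x + y \<in> range (\<lambda>a. scl C a z)" by (auto intro: range_eqI[where x="a + b"] simp: V.scale_left_distrib)
    next
      fix c x assume "x \<in> range (\<lambda>a. scl C a z)"
      then obtain a where "x = scl C a z" by blast
      then show "scl C c x \<in> range (\<lambda>a. scl C a z)" by (auto intro: range_eqI[where x="c * a"])
    qed
    show "N \<subseteq> car C" unfolding N_def using z car_scl by blast
  next
    fix b :: "nat set \<times> 'g" and x assume b: "b \<in> abasis k" and "x \<in> N"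
    then obtain a where xa: "x = scl C a z" unfolding N_def by blast
    have "coact C b x = scl C a (coact C b z)" unfolding xa using coact_scl b z by blast
    also have "\<dots> = scl C (if b = ({}, g) then a else 0) z" using cz[OF b] by auto
    finally show "coact C b x \<in> N" unfolding N_def by blast
  qed
  have "z \<in> N" unfolding N_def by (rule range_eqI[where x=1]) simp
  then have "N \<noteq> {0}" using z by blast
  then have NC: "N = car C" using sim subN unfolding simple_comodule_def by blast
  define phi where "phi x = (SOME a. x = scl C a z)" for x
  have phi: "x = scl C (phi x) z" if "x \<in> car C" for x
  proof -
    have "\<exists>a. x = scl C a z" using that NC unfolding N_def by blast
    then show ?thesis unfolding phi_def by (rule someI_ex)
  qed
  have phi_eq: "phi x = a" if "x \<in> car C" "x = scl C a z" for x a
    using phi[OF that(1)] that(2) z(2) by simp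
  define f where "f x = (\<lambda>_::unit. phi x)" for x
  have hom: "comod_hom k C (kg g :: ('k, unit \<Rightarrow> 'k, 'g) comod) f"
    unfolding comod_hom_def
  proof (intro conjI ballI allI)
    fix x assume "x \<in> car C"
    show "f x \<in> car (kg g :: ('k, unit \<Rightarrow> 'k, 'g) comod)" by (simp add: kg_def)
  next
    fix x y assume xy: "x \<in> car C" "y \<in> car C"
    have "phi (x + y) = phi x + phi y"
      by (rule phi_eq) (use xy car_add phi[OF xy(1)] phi[OF xy(2)] in \<open>auto simp: V.scale_left_distrib\<close>)
    then show "f (x + y) = f x + f y" by (simp add: f_def fun_eq_iff)
  next
    fix a x assume x: "x \<in> car C"
    have "phi (scl C a x) = a * phi x"
    proof (rule phi_eq)
      show "scl C a x \<in> car C" using x car_scl by blast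
      have "scl C a x = scl C a (scl C (phi x) z)" using phi[OF x] by simp
      then show "scl C a x = scl C (a * phi x) z" by simp
    qed
    then show "f (scl C a x) = scl (kg g) a (f x)" by (simp add: f_def kg_def fscale_def)
  next
    fix b :: "nat set \<times> 'g" and x assume b: "b \<in> abasis k" and x: "x \<in> car C"
    have "coact C b x = scl C (phi x) (coact C b z)" using coact_scl b z phi[OF x] by metis
    also have "\<dots> = (if b = ({}, g) then x else 0)" using cz[OF b] phi[OF x] by auto
    finally have "coact C b x = (if b = ({}, g) then x else 0)" .
    moreover have "phi 0 = 0" by (rule phi_eq) (auto simp: car0)
    ultimately show "f (coact C b x) = coact (kg g) b (f x)" by (simp add: f_def kg_def fun_eq_iff)
  qed
  have "bij_betw f (car C) (car (kg g :: ('k, unit \<Rightarrow> 'k, 'g) comod))"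
    unfolding bij_betw_def
  proof
    show "inj_on f (car C)"
    proof (rule inj_onI)
      fix x y assume "x \<in> car C" "y \<in> car C" "f x = f y"
      then show "x = y" using phi by (metis f_def)
    qed
    show "f ` car C = car (kg g :: ('k, unit \<Rightarrow> 'k, 'g) comod)"
    proof
      show "f ` car C \<subseteq> car (kg g)" by (simp add: kg_def)
      show "car (kg g) \<subseteq> f ` car C"
      proof
        fix w :: "unit \<Rightarrow> 'k" assume "w \<in> car (kg g)"
        have "scl C (w ()) z \<in> car C" using z car_scl by blast
        moreover have "f (scl C (w ()) z) = w"
          using phi_eq[OF \<open>scl C (w ()) z \<in> car C\<close> refl] by (simp add: f_def fun_eq_iff)
        ultimately show "w \<in> f ` car C" by (metis image_eqI)
      qed
    qed
  qed
  then show ?thesis using hom unfolding comod_isomorphic_def by blast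
qed

end

context comodctx begin

definition actC :: "(nat set \<times> 'g \<Rightarrow> 'k) \<Rightarrow> 'm \<Rightarrow> 'm" where
  "actC \<alpha> y = (\<Sum>b\<in>abasis k. scl C (\<alpha> b) (coact C b y))"

lemma actC_car: "y \<in> car C \<Longrightarrow> actC \<alpha> y \<in> car C"
  unfolding actC_def by (intro car_sum car_scl coact_car) auto

lemma actC_add: "actC (\<lambda>b. \<alpha> b + \<beta> b) y = actC \<alpha> y + actC \<beta> y"
  unfolding actC_def by (simp add: V.scale_left_distrib sum.distrib)

lemma actC_scale: "actC (\<lambda>b. a * \<alpha> b) y = scl C a (actC \<alpha> y)"
  unfolding actC_def by (simp add: V.scale_sum_right)

lemma actC_coact:
  assumes c: "c \<in> abasis k" and y: "y \<in> car C"
  shows "coact C c (actC \<alpha> y) = actC (\<lambda>b'. \<Sum>b\<in>abasis k. \<alpha> b * cop_coeff u b' b c) y"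
proof -
  have "coact C c (actC \<alpha> y) = (\<Sum>b\<in>abasis k. coact C c (scl C (\<alpha> b) (coact C b y)))"
    unfolding actC_def by (rule coact_sum) (use c y in \<open>auto intro: car_scl coact_car\<close>)
  also have "\<dots> = (\<Sum>b\<in>abasis k. scl C (\<alpha> b) (\<Sum>b'\<in>abasis k. scl C (cop_coeff u b' b c) (coact C b' y)))"
    by (intro sum.cong refl) (simp add: coact_scl c y coact_car coassoc)
  also have "\<dots> = (\<Sum>b\<in>abasis k. \<Sum>b'\<in>abasis k. scl C (\<alpha> b * cop_coeff u b' b c) (coact C b' y))"
    by (simp add: V.scale_sum_right)
  also have "\<dots> = (\<Sum>b'\<in>abasis k. \<Sum>b\<in>abasis k. scl C (\<alpha> b * cop_coeff u b' b c) (coact C b' y))"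
    by (rule sum.swap)
  also have "\<dots> = actC (\<lambda>b'. \<Sum>b\<in>abasis k. \<alpha> b * cop_coeff u b' b c) y"
    unfolding actC_def by (simp add: V.scale_sum_left)
  finally show ?thesis .
qed

lemma coact_gl:
  assumes b: "b \<in> abasis k" and y: "y \<in> car C"
  shows "coact C b (coact C ({}, h) y) = (if h = ((+) u ^^ card (fst b)) (snd b) then coact C b y else 0)"
proof -
  have h0: "({}, h) \<in> abasis k" by simp
  have "coact C b (coact C ({}, h) y) = (\<Sum>b''\<in>abasis k. scl C (cop_coeff u b'' ({}, h) b) (coact C b'' y))"
    using coassoc[OF h0 b y] .
  also have "\<dots> = scl C (cop_coeff u b ({}, h) b) (coact C b y)"
  proof (subst sum_single[where a=b])
    show "finite (abasis k :: (nat set \<times> 'g) set)" by simp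
    fix b'' assume "b'' \<in> abasis k" "b'' \<noteq> b"
    then have "cop_coeff u b'' ({}, h) b = (0::'k)"
      by (intro cop_zero) (cases b''; cases b; auto)
    then show "scl C (cop_coeff u b'' ({}, h) b) (coact C b'' y) = 0" by simp
  qed (use b in simp)
  also have "\<dots> = (if h = ((+) u ^^ card (fst b)) (snd b) then coact C b y else 0)"
  proof (cases "h = ((+) u ^^ card (fst b)) (snd b)")
    case True
    have "cop_coeff u b ({}, h) b = (1 :: 'k)" by (rule cop_val[where d=b and c="({}, h)", simplified]) (use True in simp)
    then show ?thesis using True by simp
  next
    case False
    have "cop_coeff u b ({}, h) b = (0 :: 'k)" by (rule cop_zero) (use False in simp)
    then show ?thesis using False by simp
  qed
  finally show ?thesis .
qed

end

locale homctx = C: comodctx k u C + D: comodctx k u D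
  for k u and C :: "('k::field, 'm::ab_group_add, 'g::{finite,ab_group_add}) comod"
    and D :: "('k, 'n::ab_group_add, 'g) comod" +
  fixes f :: "'m \<Rightarrow> 'n"
  assumes hom: "comod_hom k C D f"
begin

lemma f_car: "x \<in> car C \<Longrightarrow> f x \<in> car D" using hom by (simp add: comod_hom_def)
lemma f_add: "x \<in> car C \<Longrightarrow> y \<in> car C \<Longrightarrow> f (x + y) = f x + f y" using hom by (simp add: comod_hom_def)
lemma f_scl: "x \<in> car C \<Longrightarrow> f (scl C a x) = scl D a (f x)" using hom by (simp add: comod_hom_def)
lemma f_coact: "b \<in> abasis k \<Longrightarrow> x \<in> car C \<Longrightarrow> f (coact C b x) = coact D b (f x)" using hom by (simp add: comod_hom_def)

lemma f_0: "f 0 = 0"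
proof -
  have "f (0 + 0) = f 0 + f 0" using f_add C.car0 by blast
  then show ?thesis by simp
qed

lemma f_sum:
  assumes "finite I" "\<And>i. i \<in> I \<Longrightarrow> v i \<in> car C"
  shows "f (sum v I) = (\<Sum>i\<in>I. f (v i))"
  using assms
proof (induct I rule: finite_induct)
  case empty then show ?case by (simp add: f_0)
next
  case (insert i I)
  then show ?case by (simp add: f_add C.car_sum)
qed

lemma f_actC: "y \<in> car C \<Longrightarrow> f (C.actC \<alpha> y) = D.actC \<alpha> (f y)"
  unfolding C.actC_def D.actC_def
  by (subst f_sum) (auto intro!: sum.cong simp: f_scl f_coact C.coact_car C.car_scl)

end

lemma kg_simple:
  fixes u :: "'g::{finite,ab_group_add}"
  shows "simple_comodule k u (kg g :: ('k::field, unit \<Rightarrow> 'k, 'g) comod)"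
  unfolding simple_comodule_def
proof (intro conjI allI impI)
  show "is_comodule k u (kg g :: ('k::field, unit \<Rightarrow> 'k, 'g) comod)" by (rule kg_comodule)
  have "(\<lambda>_. 1) \<notin> {0 :: unit \<Rightarrow> 'k}" by (simp add: fun_eq_iff)
  then show "car (kg g :: ('k::field, unit \<Rightarrow> 'k, 'g) comod) \<noteq> {0}" by (auto simp: kg_def)
  fix N assume N: "subcomodule k (kg g :: ('k::field, unit \<Rightarrow> 'k, 'g) comod) N"
  then have sN: "module.subspace fscale N" by (simp add: subcomodule_def kg_def)
  show "N = {0} \<or> N = car (kg g :: ('k::field, unit \<Rightarrow> 'k, 'g) comod)"
  proof (cases "N = {0}")
    case True then show ?thesis by simp
  next
    case False
    then have "N \<noteq> {0}" .
    moreover have "0 \<in> N" using module.subspace_0[OF mod_fscale sN] .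
    ultimately obtain w where w: "w \<in> N" "w \<noteq> 0" by blast
    have w0: "w () \<noteq> 0"
    proof (rule notI)
      assume "w () = 0"
      then have "w = 0" by (simp add: fun_eq_iff)
      then show False using w(2) by simp
    qed
    have "v \<in> N" for v :: "unit \<Rightarrow> 'k"
    proof -
      have "fscale (v () / w ()) w \<in> N" using module.subspace_scale[OF mod_fscale sN w(1)] .
      moreover have "fscale (v () / w ()) w = v" using w0 by (simp add: fscale_def fun_eq_iff)
      ultimately show ?thesis by simp
    qed
    then show ?thesis by (auto simp: kg_def)
  qed
qed

lemma kg_iso_eq:
  fixes u :: "'g::{finite,ab_group_add}"
  assumes "comod_isomorphic k (kg g :: ('k::field, unit \<Rightarrow> 'k, 'g) comod) (kg h :: ('k, unit \<Rightarrow> 'k, 'g) comod)"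
  shows "g = h"
proof (rule ccontr)
  assume gh: "g \<noteq> h"
  from assms obtain f where f: "comod_hom k (kg g :: ('k::field, unit \<Rightarrow> 'k, 'g) comod) (kg h) f"
     "bij_betw f (car (kg g :: ('k::field, unit \<Rightarrow> 'k, 'g) comod)) (car (kg h :: ('k, unit \<Rightarrow> 'k, 'g) comod))"
    unfolding comod_isomorphic_def by blast
  have gb: "({}, g) \<in> abasis k" by simp
  have c1: "(\<lambda>_. 1) \<in> car (kg g :: ('k::field, unit \<Rightarrow> 'k, 'g) comod)" by (simp add: kg_def)
  have "\<forall>b\<in>abasis k. \<forall>x\<in>car (kg g :: ('k::field, unit \<Rightarrow> 'k, 'g) comod). f (coact (kg g) b x) = coact (kg h :: ('k, unit \<Rightarrow> 'k, 'g) comod) b (f x)"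
    using f(1) unfolding comod_hom_def by blast
  then have "f (coact (kg g :: ('k::field, unit \<Rightarrow> 'k, 'g) comod) ({}, g) (\<lambda>_. 1)) = coact (kg h :: ('k, unit \<Rightarrow> 'k, 'g) comod) ({}, g) (f (\<lambda>_. 1))"
    using gb c1 by blast
  then have f1: "f (\<lambda>_. 1) = 0" using gh by (simp add: kg_def)
  have car_kg: "car (kg g :: ('k::field, unit \<Rightarrow> 'k, 'g) comod) = UNIV" by (simp add: kg_def)
  have add: "\<forall>x y. f (x + y) = f x + f y" using f(1) unfolding comod_hom_def car_kg by blast
  have "f 0 = f 0 + f 0" using add[rule_format, of 0 0] by simp
  then have f0: "f 0 = 0" by simp
  have "inj f" using f(2) by (simp add: bij_betw_def kg_def)
  then have "(\<lambda>_. 1) = (0 :: unit \<Rightarrow> 'k)" using f0 f1 by (metis injD)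
  then show False by (simp add: fun_eq_iff)
qed

lemma wedge_empty: "wedge_act act g {} Q = (if Q = {} then 1 else 0)"
proof -
  have S: "{\<sigma> \<in> {} \<rightarrow>\<^sub>E Q. bij_betw \<sigma> {} Q} = (if Q = {} then {\<lambda>_. undefined} else {})"
    by (auto simp: PiE_def extensional_def bij_betw_def fun_eq_iff)
  show ?thesis unfolding wedge_act_def S by simp
qed

lemma mult_unit: "mult_coeff act b ({}, h) e = (if snd e = snd b + h \<and> fst b = fst e then 1 else 0)"
  by (auto simp: mult_coeff_def wedge_empty)

lemma sum_unit_prod: "(\<Sum>p\<in>I \<times> (UNIV::unit set). f p) = (\<Sum>p\<in>I. f (p, ()))"
proof -
  have "I \<times> (UNIV::unit set) = (\<lambda>p. (p, ())) ` I" by auto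
  moreover have "inj_on (\<lambda>p. (p, ())) I" by (auto simp: inj_on_def)
  ultimately show ?thesis by (simp add: sum.reindex)
qed

lemma tensor_kg_coact:
  fixes u :: "'g::{finite,ab_group_add}" and M :: "('k::field, 'i \<Rightarrow> 'k, 'g) comod"
  assumes e: "e \<in> abasis k"
  shows "coact (comod_tensor k act I M UNIV (kg h)) e F (i, j) = (\<Sum>p\<in>I. F (p, ()) * coact M (fst e, snd e - h) (indic p) i)"
proof -
  have "coact (comod_tensor k act I M UNIV (kg h)) e F (i, j)
     = (\<Sum>b\<in>abasis k. \<Sum>c\<in>abasis k. mult_coeff act b c e *
                 (\<Sum>p\<in>I \<times> UNIV. F p * coact M b (indic (fst p)) i * coact (kg h) c (indic (snd p)) j))"
    by (simp add: comod_tensor_def)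
  also have "\<dots> = (\<Sum>b\<in>abasis k. mult_coeff act b ({}, h) e *
                 (\<Sum>p\<in>I \<times> UNIV. F p * coact M b (indic (fst p)) i * coact (kg h) ({}, h) (indic (snd p)) j))"
  proof (intro sum.cong refl)
    fix b :: "nat set \<times> 'g"
    show "(\<Sum>c\<in>abasis k. mult_coeff act b c e *
                 (\<Sum>p\<in>I \<times> UNIV. F p * coact M b (indic (fst p)) i * coact (kg h) c (indic (snd p)) j))
       = mult_coeff act b ({}, h) e *
                 (\<Sum>p\<in>I \<times> UNIV. F p * coact M b (indic (fst p)) i * coact (kg h) ({}, h) (indic (snd p)) j)"
      by (subst sum_single[where a="({}, h)"]) (auto simp: kg_def)
  qed
  also have "\<dots> = (\<Sum>b\<in>abasis k. (if snd e = snd b + h \<and> fst b = fst e then 1 else 0) *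
                 (\<Sum>p\<in>I. F (p, ()) * coact M b (indic p) i))"
    by (simp add: mult_unit sum_unit_prod kg_def indic_def)
  also have "\<dots> = (\<Sum>p\<in>I. F (p, ()) * coact M (fst e, snd e - h) (indic p) i)"
  proof (subst sum_single[where a="(fst e, snd e - h)"])
    show "finite (abasis k :: (nat set \<times> 'g) set)" by simp
    fix b :: "nat set \<times> 'g" assume "b \<in> abasis k" "b \<noteq> (fst e, snd e - h)"
    then show "(if snd e = snd b + h \<and> fst b = fst e then 1 else 0) * (\<Sum>p\<in>I. F (p, ()) * coact M b (indic p) i) = 0"
      by (cases b) (auto simp: algebra_simps)
  qed (use e in \<open>cases e, auto\<close>)
  finally show ?thesis .
qed

lemma kg_tensor_iso:
  fixes u :: "'g::{finite,ab_group_add}"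
  shows "comod_isomorphic k
                (comod_tensor k act UNIV (kg g) UNIV (kg h) :: ('k::field, unit \<times> unit \<Rightarrow> 'k, 'g) comod)
                (kg (g + h) :: ('k, unit \<Rightarrow> 'k, 'g) comod)"
proof -
  define f where "f F = (\<lambda>_::unit. F ((), ()))" for F :: "unit \<times> unit \<Rightarrow> 'k"
  have hom: "comod_hom k (comod_tensor k act UNIV (kg g) UNIV (kg h) :: ('k::field, unit \<times> unit \<Rightarrow> 'k, 'g) comod)
                (kg (g + h) :: ('k, unit \<Rightarrow> 'k, 'g) comod) f"
    unfolding comod_hom_def
  proof (intro conjI ballI allI)
    fix b :: "nat set \<times> 'g" and F :: "unit \<times> unit \<Rightarrow> 'k" assume b: "b \<in> abasis k"
    have "f (coact (comod_tensor k act UNIV (kg g) UNIV (kg h)) b F) ()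
       = (\<Sum>p\<in>UNIV. F (p, ()) * coact (kg g) (fst b, snd b - h) (indic p) ())"
      unfolding f_def by (rule tensor_kg_coact[OF b])
    also have "\<dots> = (if b = ({}, g + h) then F ((), ()) else 0)"
      by (cases b) (auto simp: kg_def indic_def algebra_simps UNIV_unit)
    finally show "f (coact (comod_tensor k act UNIV (kg g) UNIV (kg h)) b F) = coact (kg (g + h)) b (f F)"
      by (auto simp: fun_eq_iff kg_def f_def)
  qed (auto simp: f_def comod_tensor_def kg_def fscale_def)
  have "bij_betw f (car (comod_tensor k act UNIV (kg g) UNIV (kg h) :: ('k::field, unit \<times> unit \<Rightarrow> 'k, 'g) comod))
                (car (kg (g + h) :: ('k, unit \<Rightarrow> 'k, 'g) comod))"
  proof (rule bij_betwI[where g="\<lambda>w _. w ()"])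
    show "f \<in> car (comod_tensor k act UNIV (kg g) UNIV (kg h) :: ('k::field, unit \<times> unit \<Rightarrow> 'k, 'g) comod) \<rightarrow> car (kg (g + h) :: ('k, unit \<Rightarrow> 'k, 'g) comod)"
      by (simp add: kg_def)
    show "(\<lambda>w _. w ()) \<in> car (kg (g + h) :: ('k, unit \<Rightarrow> 'k, 'g) comod) \<rightarrow> car (comod_tensor k act UNIV (kg g) UNIV (kg h) :: ('k::field, unit \<times> unit \<Rightarrow> 'k, 'g) comod)"
      by (simp add: comod_tensor_def)
  qed (auto simp: f_def fun_eq_iff)
  then show ?thesis using hom unfolding comod_isomorphic_def by blast
qed


lemma Pset_eq: "Pset k g = (\<lambda>S. (S, g)) ` Pow {..<k}" by (auto simp: Pset_def)

lemma sum_Pset: "(\<Sum>p\<in>Pset k g. f p) = (\<Sum>S\<in>Pow {..<k}. f (S, g))"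
  by (simp add: Pset_eq sum.reindex inj_on_def)

lemma coact_Pg_indic:
  fixes u :: "'g::{finite,ab_group_add}"
  assumes "p \<in> abasis k"
  shows "coact (Pg k u g :: ('k::field, nat set \<times> 'g \<Rightarrow> 'k, 'g) comod) b (indic p) i = cop_coeff u p b i"
  unfolding coact_Pg using assms by (subst sum_single[where a=p]) (auto simp: indic_def)

lemma cop_shift:
  fixes u :: "'g::{finite,ab_group_add}"
  shows "cop_coeff u (T, g + h) e (S, l) = (if l = g + h then cop_coeff u (T, g) (fst e, snd e - h) (S, g) else (0::'k::comm_ring_1))"
proof -
  have eq: "(snd e = ((+) u ^^ card S) (g + h)) = (snd e - h = ((+) u ^^ card S) g)"
    by (subst upow_0, subst (2) upow_0) (auto simp: algebra_simps)
  show ?thesis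
  proof (cases "l = g + h")
    case True
    show ?thesis
    proof (cases "fst e \<union> S = T \<and> fst e \<inter> S = {} \<and> snd e = ((+) u ^^ card S) (g + h)")
      case c: True
      have "cop_coeff u (T, g + h) e (S, l) = (sg S (fst e) :: 'k)" by (rule cop_val[where d="(S, l)", simplified]) (use c True in simp)
      moreover have "cop_coeff u (T, g) (fst e, snd e - h) (S, g) = (sg S (fst e) :: 'k)" by (rule cop_val[where d="(S, g)" and c="(fst e, snd e - h)", simplified]) (use c eq in simp)
      ultimately show ?thesis using True by simp
    next
      case c: False
      have "cop_coeff u (T, g + h) e (S, l) = (0::'k)" by (rule cop_zero) (use c True in simp)
      moreover have "cop_coeff u (T, g) (fst e, snd e - h) (S, g) = (0::'k)" by (rule cop_zero) (use c eq in simp)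
      ultimately show ?thesis using True by simp
    qed
  next
    case False
    have "cop_coeff u (T, g + h) e (S, l) = (0::'k)" by (rule cop_zero) (use False in simp)
    then show ?thesis using False by simp
  qed
qed

lemma Pg_tensor_iso:
  fixes u :: "'g::{finite,ab_group_add}"
  shows "comod_isomorphic k
                (comod_tensor k act {(S, l). S \<subseteq> {..<k} \<and> l = g} (Pg k u g) UNIV (kg h)
                   :: ('k::field, (nat set \<times> 'g) \<times> unit \<Rightarrow> 'k, 'g) comod)
                (Pg k u (g + h) :: ('k, nat set \<times> 'g \<Rightarrow> 'k, 'g) comod)"
proof -
  have PS: "{(S, l). S \<subseteq> {..<k} \<and> l = g} = Pset k g" by (simp add: Pset_def)
  define T where "T = (comod_tensor k act (Pset k g) (Pg k u g) UNIV (kg h)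
                   :: ('k::field, (nat set \<times> 'g) \<times> unit \<Rightarrow> 'k, 'g) comod)"
  define P where "P = (Pg k u (g + h) :: ('k, nat set \<times> 'g \<Rightarrow> 'k, 'g) comod)"
  define f where "f F = (\<lambda>(S, l). if l = g + h then F ((S, g), ()) else 0)" for F :: "(nat set \<times> 'g) \<times> unit \<Rightarrow> 'k"
  define G where "G x = (\<lambda>(p, j::unit). if snd p = g then x (fst p, g + h) else 0)" for x :: "nat set \<times> 'g \<Rightarrow> 'k"
  have carT: "car T = fspace (Pset k g \<times> UNIV)" by (simp add: T_def comod_tensor_def)
  have carP: "car P = fspace (Pset k (g + h))" by (simp add: P_def car_Pg)
  have fcar: "f F \<in> car P" if F: "F \<in> car T" for F
    unfolding carP fspace_def
  proof (intro CollectI allI impI)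
    fix x :: "nat set \<times> 'g" assume x: "x \<notin> Pset k (g + h)"
    obtain S l where xs: "x = (S, l)" by fastforce
    show "f F x = 0"
    proof (cases "l = g + h")
      case True
      then have "((S, g), ()) \<notin> Pset k g \<times> UNIV" using x xs by (simp add: Pset_def)
      then have "F ((S, g), ()) = 0" using F unfolding carT fspace_def by blast
      then show ?thesis using True by (simp add: f_def xs)
    qed (simp add: f_def xs)
  qed
  have Gcar: "G x \<in> car T" if x: "x \<in> car P" for x
    unfolding carT fspace_def
  proof (intro CollectI allI impI)
    fix q :: "(nat set \<times> 'g) \<times> unit" assume q: "q \<notin> Pset k g \<times> UNIV"
    obtain S l j where qs: "q = ((S, l), j)" by (metis prod.collapse)
    show "G x q = 0"
    proof (cases "l = g")
      case True
      then have "(S, g + h) \<notin> Pset k (g + h)" using q qs by (simp add: Pset_def)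
      then have "x (S, g + h) = 0" using x unfolding carP fspace_def by blast
      then show ?thesis using True by (simp add: G_def qs)
    qed (simp add: G_def qs)
  qed
  have fG: "f (G x) = x" if x: "x \<in> car P" for x
  proof
    fix y :: "nat set \<times> 'g"
    obtain S l where ys: "y = (S, l)" by fastforce
    show "f (G x) y = x y"
    proof (cases "l = g + h")
      case False
      then have "y \<notin> Pset k (g + h)" using ys by (simp add: Pset_def)
      then have "x y = 0" using x unfolding carP fspace_def by blast
      then show ?thesis using False by (simp add: f_def ys)
    qed (simp add: f_def G_def ys)
  qed
  have Gf: "G (f F) = F" if F: "F \<in> car T" for F
  proof
    fix q :: "(nat set \<times> 'g) \<times> unit"
    obtain S l where qs: "q = ((S, l), ())" by (metis prod.collapse old.unit.exhaust)
    show "G (f F) q = F q"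
    proof (cases "l = g")
      case False
      then have "q \<notin> Pset k g \<times> UNIV" using qs by (simp add: Pset_def)
      then have "F q = 0" using F unfolding carT fspace_def by blast
      then show ?thesis using False by (simp add: G_def qs)
    qed (simp add: f_def G_def qs)
  qed
  have hom: "comod_hom k T P f"
    unfolding comod_hom_def
  proof (intro conjI ballI allI)
    fix F assume "F \<in> car T" then show "f F \<in> car P" by (rule fcar)
  next
    fix F F' :: "(nat set \<times> 'g) \<times> unit \<Rightarrow> 'k"
    show "f (F + F') = f F + f F'" by (auto simp: f_def fun_eq_iff)
  next
    fix a and F :: "(nat set \<times> 'g) \<times> unit \<Rightarrow> 'k"
    show "f (scl T a F) = scl P a (f F)"
      by (auto simp: f_def fun_eq_iff T_def P_def comod_tensor_def scl_Pg fscale_def)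
  next
    fix e :: "nat set \<times> 'g" and F assume e: "e \<in> abasis k" and F: "F \<in> car T"
    show "f (coact T e F) = coact P e (f F)"
    proof
      fix y :: "nat set \<times> 'g"
      obtain S l where ys: "y = (S, l)" by fastforce
      have lhs: "f (coact T e F) y = (if l = g + h then (\<Sum>T'\<in>Pow {..<k}. F ((T', g), ()) * cop_coeff u (T', g) (fst e, snd e - h) (S, g)) else 0)"
      proof -
        have "coact T e F ((S, g), ()) = (\<Sum>p\<in>Pset k g. F (p, ()) * coact (Pg k u g :: ('k::field, nat set \<times> 'g \<Rightarrow> 'k, 'g) comod) (fst e, snd e - h) (indic p) (S, g))"
          unfolding T_def by (rule tensor_kg_coact[OF e])
        also have "\<dots> = (\<Sum>p\<in>Pset k g. F (p, ()) * cop_coeff u p (fst e, snd e - h) (S, g))"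
          by (intro sum.cong refl, subst coact_Pg_indic) (use Pset_abasis[of k g] in auto)
        also have "\<dots> = (\<Sum>T'\<in>Pow {..<k}. F ((T', g), ()) * cop_coeff u (T', g) (fst e, snd e - h) (S, g))"
          by (rule sum_Pset)
        finally show ?thesis by (simp add: f_def ys)
      qed
      have "coact P e (f F) y = (\<Sum>b0\<in>abasis k. f F b0 * cop_coeff u b0 e (S, l))"
        by (simp add: P_def coact_Pg ys)
      also have "\<dots> = (\<Sum>b0\<in>Pset k (g + h). f F b0 * cop_coeff u b0 e (S, l))"
      proof (rule sum.mono_neutral_right)
        show "finite (abasis k :: (nat set \<times> 'g) set)" by simp
        show "Pset k (g + h) \<subseteq> abasis k" by (rule Pset_abasis)
        show "\<forall>i\<in>abasis k - Pset k (g + h). f F i * cop_coeff u i e (S, l) = 0"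
          using fcar[OF F] unfolding carP fspace_def by auto
      qed
      also have "\<dots> = (\<Sum>T'\<in>Pow {..<k}. F ((T', g), ()) * cop_coeff u (T', g + h) e (S, l))"
        by (simp add: sum_Pset f_def)
      also have "\<dots> = (if l = g + h then (\<Sum>T'\<in>Pow {..<k}. F ((T', g), ()) * cop_coeff u (T', g) (fst e, snd e - h) (S, g)) else 0)"
        by (simp add: cop_shift)
      finally show "f (coact T e F) y = coact P e (f F) y" using lhs by simp
    qed
  qed
  have "bij_betw f (car T) (car P)"
    by (rule bij_betwI[where g=G]) (use fcar Gcar fG Gf in auto)
  then show ?thesis using hom unfolding comod_isomorphic_def T_def P_def PS by blast
qed


lemma Pg_ctx:
  fixes u :: "'g::{finite,ab_group_add}"
  shows "comodctx k u (Pg k u g :: ('k::field, nat set \<times> 'g \<Rightarrow> 'k, 'g) comod)"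
  by unfold_locales (rule Pg_comodule)

lemma upow_cancel:
  fixes u :: "'g::ab_group_add"
  shows "((+) u ^^ n) a = ((+) u ^^ n) b \<Longrightarrow> a = b"
  by (subst (asm) upow_0, subst (asm) (2) upow_0) simp

lemma Pg_act_t:
  fixes u :: "'g::{finite,ab_group_add}" and \<beta> :: "nat set \<times> 'g \<Rightarrow> 'k::field"
  assumes S: "S \<subseteq> {..<k}"
  shows "comodctx.actC k (Pg k u g :: ('k, nat set \<times> 'g \<Rightarrow> 'k, 'g) comod) \<beta> (indic ({..<k}, g)) (S, g)
       = sg S ({..<k} - S) * \<beta> ({..<k} - S, ((+) u ^^ card S) g)"
proof -
  interpret P: comodctx k u "Pg k u g :: ('k, nat set \<times> 'g \<Rightarrow> 'k, 'g) comod" by (rule Pg_ctx)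
  have full: "({..<k}, g) \<in> abasis k" by simp
  have "P.actC \<beta> (indic ({..<k}, g)) (S, g) = (\<Sum>b\<in>abasis k. \<beta> b * cop_coeff u ({..<k}, g) b (S, g))"
    unfolding P.actC_def sum_fun_apply by (simp add: scl_Pg fscale_def coact_Pg_indic[OF full])
  also have "\<dots> = \<beta> ({..<k} - S, ((+) u ^^ card S) g) * cop_coeff u ({..<k}, g) ({..<k} - S, ((+) u ^^ card S) g) (S, g)"
  proof (subst sum_single[where a="({..<k} - S, ((+) u ^^ card S) g)"])
    show "finite (abasis k :: (nat set \<times> 'g) set)" by simp
    fix b :: "nat set \<times> 'g" assume "b \<in> abasis k" "b \<noteq> ({..<k} - S, ((+) u ^^ card S) g)"
    then have "cop_coeff u ({..<k}, g) b (S, g) = (0::'k)"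
      by (intro cop_zero) (cases b, auto)
    then show "\<beta> b * cop_coeff u ({..<k}, g) b (S, g) = 0" by simp
  qed simp
  also have "cop_coeff u ({..<k}, g) ({..<k} - S, ((+) u ^^ card S) g) (S, g) = (sg S ({..<k} - S) :: 'k)"
    by (rule cop_val[where d="(S, g)" and c="({..<k} - S, ((+) u ^^ card S) g)", simplified]) (use S in auto)
  finally show ?thesis by (simp add: mult.commute)
qed

definition alphaP :: "nat \<Rightarrow> 'g::ab_group_add \<Rightarrow> 'g \<Rightarrow> (nat set \<times> 'g \<Rightarrow> 'k::comm_ring_1) \<Rightarrow> nat set \<times> 'g \<Rightarrow> 'k" where
  "alphaP k u g x b = (if fst b \<subseteq> {..<k} \<and> snd b = ((+) u ^^ card ({..<k} - fst b)) g
      then sg ({..<k} - fst b) (fst b) * x ({..<k} - fst b, g) else 0)"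

lemma Pg_act_alpha:
  fixes u :: "'g::{finite,ab_group_add}"
  assumes x: "x \<in> car (Pg k u g :: ('k::field, nat set \<times> 'g \<Rightarrow> 'k, 'g) comod)"
  shows "comodctx.actC k (Pg k u g :: ('k, nat set \<times> 'g \<Rightarrow> 'k, 'g) comod) (alphaP k u g x) (indic ({..<k}, g)) = x"
proof
  interpret P: comodctx k u "Pg k u g :: ('k, nat set \<times> 'g \<Rightarrow> 'k, 'g) comod" by (rule Pg_ctx)
  fix y :: "nat set \<times> 'g"
  obtain S l where ys: "y = (S, l)" by fastforce
  have tc: "indic ({..<k}, g) \<in> car (Pg k u g :: ('k, nat set \<times> 'g \<Rightarrow> 'k, 'g) comod)"
    by (auto simp: car_Pg fspace_def Pset_def indic_def)
  show "P.actC (alphaP k u g x) (indic ({..<k}, g)) y = x y"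
  proof (cases "S \<subseteq> {..<k} \<and> l = g")
    case True
    then have S: "S \<subseteq> {..<k}" and l: "l = g" by auto
    have SS: "{..<k} - ({..<k} - S) = S" using S by auto
    have "P.actC (alphaP k u g x) (indic ({..<k}, g)) y = sg S ({..<k} - S) * alphaP k u g x ({..<k} - S, ((+) u ^^ card S) g)"
      unfolding ys l by (rule Pg_act_t[OF S])
    also have "\<dots> = sg S ({..<k} - S) * sg S ({..<k} - S) * x (S, g)"
      by (simp add: alphaP_def SS)
    also have "\<dots> = x y" by (simp add: sg_sq ys l)
    finally show ?thesis .
  next
    case False
    then have "y \<notin> Pset k g" by (simp add: Pset_def ys)
    moreover have "P.actC (alphaP k u g x) (indic ({..<k}, g)) \<in> fspace (Pset k g)"
      using P.actC_car[OF tc] by (simp add: car_Pg)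
    moreover have "x \<in> fspace (Pset k g)" using x by (simp add: car_Pg)
    ultimately show ?thesis unfolding fspace_def mem_Collect_eq by metis
  qed
qed

lemma Pg_agree:
  fixes u :: "'g::{finite,ab_group_add}"
  assumes x: "x \<in> car (Pg k u g :: ('k::field, nat set \<times> 'g \<Rightarrow> 'k, 'g) comod)"
    and c: "c \<in> abasis k" and b: "b \<in> abasis k"
    and hb: "((+) u ^^ k) g = ((+) u ^^ card (fst b)) (snd b)"
  shows "(\<Sum>b1\<in>abasis k. alphaP k u g x b1 * cop_coeff u b b1 c)
       = alphaP k u g (coact (Pg k u g :: ('k::field, nat set \<times> 'g \<Rightarrow> 'k, 'g) comod) c x) b"
proof -
  interpret P: comodctx k u "Pg k u g :: ('k, nat set \<times> 'g \<Rightarrow> 'k, 'g) comod" by (rule Pg_ctx)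
  define S where "S = {..<k} - fst b"
  have fb: "fst b \<subseteq> {..<k}" using b by (cases b) auto
  have S: "S \<subseteq> {..<k}" unfolding S_def by auto
  have SS: "{..<k} - S = fst b" using fb unfolding S_def by auto
  have cardk: "card (fst b) + card S = k"
    using fb unfolding S_def by (metis card_Diff_subset card_lessThan card_mono finite_lessThan finite_subset le_add_diff_inverse)
  have "((+) u ^^ k) g = ((+) u ^^ card (fst b)) (((+) u ^^ card S) g)"
    by (subst cardk[symmetric]) (simp add: funpow_add)
  then have "((+) u ^^ card (fst b)) (snd b) = ((+) u ^^ card (fst b)) (((+) u ^^ card S) g)"
    using hb by simp
  then have sb: "snd b = ((+) u ^^ card S) g" by (rule upow_cancel)
  have bS: "b = ({..<k} - S, ((+) u ^^ card S) g)" using SS sb by (cases b) auto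
  have tc: "indic ({..<k}, g) \<in> car (Pg k u g :: ('k, nat set \<times> 'g \<Rightarrow> 'k, 'g) comod)"
    by (auto simp: car_Pg fspace_def Pset_def indic_def)
  have cx: "coact (Pg k u g) c x \<in> car (Pg k u g :: ('k, nat set \<times> 'g \<Rightarrow> 'k, 'g) comod)"
    using P.coact_car[OF c x] .
  have "P.actC (\<lambda>b'. \<Sum>b1\<in>abasis k. alphaP k u g x b1 * cop_coeff u b' b1 c) (indic ({..<k}, g))
      = coact (Pg k u g) c (P.actC (alphaP k u g x) (indic ({..<k}, g)))"
    by (rule P.actC_coact[OF c tc, symmetric])
  also have "\<dots> = coact (Pg k u g) c x" using Pg_act_alpha[OF x] by simp
  also have "\<dots> = P.actC (alphaP k u g (coact (Pg k u g) c x)) (indic ({..<k}, g))"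
    using Pg_act_alpha[OF cx] by simp
  finally have E: "P.actC (\<lambda>b'. \<Sum>b1\<in>abasis k. alphaP k u g x b1 * cop_coeff u b' b1 c) (indic ({..<k}, g)) (S, g)
      = P.actC (alphaP k u g (coact (Pg k u g) c x)) (indic ({..<k}, g)) (S, g)" by simp
  have "sg S ({..<k} - S) * (\<Sum>b1\<in>abasis k. alphaP k u g x b1 * cop_coeff u b b1 c)
      = sg S ({..<k} - S) * alphaP k u g (coact (Pg k u g) c x) b"
    using E unfolding Pg_act_t[OF S] bS .
  then have "sg S ({..<k} - S) * (sg S ({..<k} - S) * (\<Sum>b1\<in>abasis k. alphaP k u g x b1 * cop_coeff u b b1 c))
      = sg S ({..<k} - S) * (sg S ({..<k} - S) * alphaP k u g (coact (Pg k u g) c x) b)" by simp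
  then show ?thesis by (simp add: sg_sq flip: mult.assoc)
qed

lemma Pg_Et:
  fixes u :: "'g::{finite,ab_group_add}"
  shows "coact (Pg k u g :: ('k::field, nat set \<times> 'g \<Rightarrow> 'k, 'g) comod) ({}, ((+) u ^^ k) g) (indic ({..<k}, g)) = indic ({..<k}, g)"
proof
  fix y :: "nat set \<times> 'g"
  obtain S l where ys: "y = (S, l)" by fastforce
  have full: "({..<k}, g) \<in> abasis k" by simp
  show "coact (Pg k u g :: ('k::field, nat set \<times> 'g \<Rightarrow> 'k, 'g) comod) ({}, ((+) u ^^ k) g) (indic ({..<k}, g)) y = indic ({..<k}, g) y"
  proof (cases "S = {..<k} \<and> l = g")
    case True
    have "cop_coeff u ({..<k}, g) ({}, ((+) u ^^ k) g) y = (1::'k)"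
      by (rule cop_val[where d=y and c="({}, ((+) u ^^ k) g)", simplified]) (use True ys in simp)
    then show ?thesis using True ys by (subst coact_Pg_indic[OF full]) (simp add: indic_def)
  next
    case False
    have "cop_coeff u ({..<k}, g) ({}, ((+) u ^^ k) g) y = (0::'k)"
      by (rule cop_zero) (use False ys in auto)
    then show ?thesis using False ys by (subst coact_Pg_indic[OF full]) (simp add: indic_def)
  qed
qed

lemma Pg_projective:
  fixes u :: "'g::{finite,ab_group_add}"
    and TC :: "'c::ab_group_add itself" and TD :: "'d::ab_group_add itself"
  shows "comod_projective k u (Pg k u g :: ('k::field, nat set \<times> 'g \<Rightarrow> 'k, 'g) comod) TC TD"
  unfolding comod_projective_def
proof (intro conjI allI impI)
  show "is_comodule k u (Pg k u g :: ('k::field, nat set \<times> 'g \<Rightarrow> 'k, 'g) comod)" by (rule Pg_comodule)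
  fix M :: "('k, 'c, 'g) comod" and N :: "('k, 'd, 'g) comod" and f q
  assume M: "is_comodule k u M" and N: "is_comodule k u N" and fh: "comod_hom k M N f"
    and fs: "f ` car M = car N" and qh: "comod_hom k (Pg k u g) N q"
  interpret M: comodctx k u M by unfold_locales (rule M)
  interpret N: comodctx k u N by unfold_locales (rule N)
  interpret P: comodctx k u "Pg k u g :: ('k, nat set \<times> 'g \<Rightarrow> 'k, 'g) comod" by (rule Pg_ctx)
  interpret F: homctx k u M N f by unfold_locales (rule fh)
  interpret Q: homctx k u "Pg k u g :: ('k, nat set \<times> 'g \<Rightarrow> 'k, 'g) comod" N q by unfold_locales (rule qh)
  define t :: "nat set \<times> 'g \<Rightarrow> 'k" where "t = indic ({..<k}, g)"
  define h where "h = ((+) u ^^ k) g"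
  have tc: "t \<in> car (Pg k u g :: ('k, nat set \<times> 'g \<Rightarrow> 'k, 'g) comod)"
    by (auto simp: car_Pg fspace_def Pset_def indic_def t_def)
  have "q t \<in> car N" using Q.f_car[OF tc] .
  then obtain m0 where m0: "m0 \<in> car M" "f m0 = q t" using fs by (metis imageE)
  have h0: "({}, h) \<in> abasis k" by simp
  define m where "m = coact M ({}, h) m0"
  have mc: "m \<in> car M" unfolding m_def using M.coact_car[OF h0 m0(1)] .
  have fm: "f m = q t"
  proof -
    have "f m = coact N ({}, h) (q t)" unfolding m_def using F.f_coact[OF h0 m0(1)] m0(2) by simp
    also have "\<dots> = q (coact (Pg k u g) ({}, h) t)" using Q.f_coact[OF h0 tc] by simp
    also have "\<dots> = q t" unfolding t_def h_def by (simp add: Pg_Et)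
    finally show ?thesis .
  qed
  define H where "H x = M.actC (alphaP k u g x) m" for x
  have "comod_hom k (Pg k u g) M H"
    unfolding comod_hom_def
  proof (intro conjI ballI allI)
    fix x assume "x \<in> car (Pg k u g :: ('k, nat set \<times> 'g \<Rightarrow> 'k, 'g) comod)"
    show "H x \<in> car M" unfolding H_def by (rule M.actC_car[OF mc])
  next
    fix x y :: "nat set \<times> 'g \<Rightarrow> 'k"
    have "alphaP k u g (x + y) = (\<lambda>b. alphaP k u g x b + alphaP k u g y b)"
      by (simp add: alphaP_def fun_eq_iff algebra_simps)
    then show "H (x + y) = H x + H y" unfolding H_def by (simp add: M.actC_add)
  next
    fix a and x :: "nat set \<times> 'g \<Rightarrow> 'k"
    have "alphaP k u g (scl (Pg k u g) a x) = (\<lambda>b. a * alphaP k u g x b)"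
      by (simp add: alphaP_def fun_eq_iff scl_Pg fscale_def algebra_simps)
    then show "H (scl (Pg k u g) a x) = scl M a (H x)" unfolding H_def by (simp add: M.actC_scale)
  next
    fix c :: "nat set \<times> 'g" and x
    assume c: "c \<in> abasis k" and x: "x \<in> car (Pg k u g :: ('k, nat set \<times> 'g \<Rightarrow> 'k, 'g) comod)"
    have "coact M c (H x) = M.actC (\<lambda>b'. \<Sum>b\<in>abasis k. alphaP k u g x b * cop_coeff u b' b c) m"
      unfolding H_def by (rule M.actC_coact[OF c mc])
    also have "\<dots> = M.actC (alphaP k u g (coact (Pg k u g) c x)) m"
      unfolding M.actC_def
    proof (intro sum.cong refl)
      fix b :: "nat set \<times> 'g" assume b: "b \<in> abasis k"
      show "scl M (\<Sum>b1\<in>abasis k. alphaP k u g x b1 * cop_coeff u b b1 c) (coact M b m)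
          = scl M (alphaP k u g (coact (Pg k u g) c x) b) (coact M b m)"
      proof (cases "h = ((+) u ^^ card (fst b)) (snd b)")
        case True
        then show ?thesis using Pg_agree[OF x c b] unfolding h_def by simp
      next
        case False
        then have "coact M b m = 0" unfolding m_def using M.coact_gl[OF b m0(1)] by simp
        then show ?thesis by simp
      qed
    qed
    finally show "H (coact (Pg k u g) c x) = coact M c (H x)" unfolding H_def by simp
  qed
  moreover have "\<forall>x\<in>car (Pg k u g). f (H x) = q x"
  proof
    fix x assume x: "x \<in> car (Pg k u g :: ('k, nat set \<times> 'g \<Rightarrow> 'k, 'g) comod)"
    have "f (H x) = N.actC (alphaP k u g x) (f m)" unfolding H_def by (rule F.f_actC[OF mc])
    also have "\<dots> = N.actC (alphaP k u g x) (q t)" using fm by simp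
    also have "\<dots> = q (P.actC (alphaP k u g x) t)" by (rule Q.f_actC[OF tc, symmetric])
    also have "\<dots> = q x" unfolding t_def using Pg_act_alpha[OF x] by simp
    finally show "f (H x) = q x" .
  qed
  ultimately show "\<exists>h. comod_hom k (Pg k u g) M h \<and> (\<forall>x\<in>car (Pg k u g). f (h x) = q x)" by blast
qed


lemma Pg_delta_in:
  fixes u :: "'g::{finite,ab_group_add}"
  assumes sub: "subcomodule k (Pg k u g :: ('k::field, nat set \<times> 'g \<Rightarrow> 'k, 'g) comod) N"
    and x: "x \<in> N" and x1: "x ({..<k}, g) = 1"
  shows "S \<subseteq> {..<k} \<Longrightarrow> indic (S, g) \<in> N"
proof (induct "card S" arbitrary: S rule: less_induct)
  case less
  note S = less.prems
  have sN: "module.subspace fscale N" using sub by (simp add: subcomodule_def scl_Pg)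
  have NP: "N \<subseteq> car (Pg k u g :: ('k, nat set \<times> 'g \<Rightarrow> 'k, 'g) comod)" using sub by (simp add: subcomodule_def)
  have xP: "x \<in> fspace (Pset k g)" using NP x by (auto simp: car_Pg)
  define c where "c = ({..<k} - S, ((+) u ^^ card S) g)"
  have c: "c \<in> abasis k" by (simp add: c_def)
  define z where "z = coact (Pg k u g :: ('k, nat set \<times> 'g \<Rightarrow> 'k, 'g) comod) c x"
  have zN: "z \<in> N" using sub c x unfolding z_def subcomodule_def by blast
  have z1: "z (S', l) = 0" if nl: "\<not> (l = g \<and> S' \<subseteq> S)" for S' l
    unfolding z_def coact_Pg
  proof (rule sum.neutral, rule ballI)
    fix b0 :: "nat set \<times> 'g" assume b0: "b0 \<in> abasis k"
    show "x b0 * cop_coeff u b0 c (S', l) = 0"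
    proof (cases "b0 \<in> Pset k g")
      case False
      then have "x b0 = 0" using xP unfolding fspace_def by blast
      then show ?thesis by simp
    next
      case True
      then have b0s: "fst b0 \<subseteq> {..<k}" "snd b0 = g" by (auto simp: Pset_def)
      have "cop_coeff u b0 c (S', l) = (0::'k)"
      proof (rule cop_zero, rule notI)
        assume "fst c \<union> fst (S', l) = fst b0 \<and> fst c \<inter> fst (S', l) = {} \<and>
            snd c = ((+) u ^^ card (fst (S', l))) (snd b0) \<and> snd (S', l) = snd b0"
        then have "({..<k} - S) \<union> S' = fst b0" "({..<k} - S) \<inter> S' = {}" "l = g"
          using b0s by (auto simp: c_def)
        then have "l = g \<and> S' \<subseteq> S" using b0s by blast
        then show False using nl by blast
      qed
      then show ?thesis by simp
    qed
  qed
  have z2: "z (S, g) = sg S ({..<k} - S)"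
  proof -
    have "z (S, g) = (\<Sum>b0\<in>abasis k. x b0 * cop_coeff u b0 c (S, g))"
      unfolding z_def coact_Pg ..
    also have "\<dots> = x ({..<k}, g) * cop_coeff u ({..<k}, g) c (S, g)"
    proof (subst sum_single[where a="({..<k}, g)"])
      show "finite (abasis k :: (nat set \<times> 'g) set)" by simp
      fix b0 :: "nat set \<times> 'g" assume b0: "b0 \<in> abasis k" "b0 \<noteq> ({..<k}, g)"
      show "x b0 * cop_coeff u b0 c (S, g) = 0"
      proof (cases "b0 \<in> Pset k g")
        case False
        then have "x b0 = 0" using xP unfolding fspace_def by blast
        then show ?thesis by simp
      next
        case True
        then have b0s: "fst b0 \<subseteq> {..<k}" "snd b0 = g" by (auto simp: Pset_def)
        have "cop_coeff u b0 c (S, g) = (0::'k)"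
        proof (rule cop_zero, rule notI)
          assume "fst c \<union> fst (S, g) = fst b0 \<and> fst c \<inter> fst (S, g) = {} \<and>
              snd c = ((+) u ^^ card (fst (S, g))) (snd b0) \<and> snd (S, g) = snd b0"
          then have "({..<k} - S) \<union> S = fst b0" by (auto simp: c_def)
          then have "fst b0 = {..<k}" using S by blast
          then have "b0 = ({..<k}, g)" using b0s by (cases b0) auto
          then show False using b0 by blast
        qed
        then show ?thesis by simp
      qed
    qed simp
    also have "cop_coeff u ({..<k}, g) c (S, g) = (sg S ({..<k} - S) :: 'k)"
      unfolding c_def
      by (rule cop_val[where d="(S, g)" and c="({..<k} - S, ((+) u ^^ card S) g)", simplified]) (use S in auto)
    finally show ?thesis using x1 by simp
  qed
  define R where "R = (\<Sum>S'\<in>Pow S - {S}. fscale (z (S', g)) (indic (S', g) :: nat set \<times> 'g \<Rightarrow> 'k))"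
  have RN: "R \<in> N" unfolding R_def
  proof (rule module.subspace_sum[OF mod_fscale sN])
    fix S' assume S': "S' \<in> Pow S - {S}"
    then have "S' \<subset> S" by auto
    then have "card S' < card S" using S by (meson finite_lessThan finite_subset psubset_card_mono)
    moreover have "S' \<subseteq> {..<k}" using S' S by auto
    ultimately have "indic (S', g) \<in> N" using less.hyps by blast
    then show "fscale (z (S', g)) (indic (S', g)) \<in> N" by (rule module.subspace_scale[OF mod_fscale sN])
  qed
  have wN: "fscale (sg S ({..<k} - S)) (z - R) \<in> N"
    by (intro module.subspace_scale[OF mod_fscale sN] module.subspace_diff[OF mod_fscale sN] zN RN)
  have finS: "finite (Pow S - {S})" using S by (meson finite_Diff finite_Pow_iff finite_lessThan finite_subset)
  have Rval: "R (S'', l) = (if l = g \<and> S'' \<in> Pow S - {S} then z (S'', g) else 0)" for S'' l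
  proof -
    have "R (S'', l) = (\<Sum>S'\<in>Pow S - {S}. z (S', g) * indic (S', g) (S'', l))"
      unfolding R_def sum_fun_apply by (simp add: fscale_def)
    also have "\<dots> = (if S'' \<in> Pow S - {S} then z (S'', g) * indic (S'', g) (S'', l) else 0)"
      by (rule sum_single[OF finS]) (auto simp: indic_def)
    also have "\<dots> = (if l = g \<and> S'' \<in> Pow S - {S} then z (S'', g) else 0)"
      by (auto simp: indic_def)
    finally show ?thesis .
  qed
  have "fscale (sg S ({..<k} - S)) (z - R) = indic (S, g)"
  proof
    fix y :: "nat set \<times> 'g"
    obtain S'' l where ys: "y = (S'', l)" by fastforce
    show "fscale (sg S ({..<k} - S)) (z - R) y = indic (S, g) y"
    proof (cases "l = g \<and> S'' \<subseteq> S")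
      case True
      show ?thesis
      proof (cases "S'' = S")
        case True
        then show ?thesis using \<open>l = g \<and> S'' \<subseteq> S\<close> by (simp add: fscale_def ys Rval z2 sg_sq indic_def)
      next
        case False
        then show ?thesis using \<open>l = g \<and> S'' \<subseteq> S\<close> by (simp add: fscale_def ys Rval indic_def)
      qed
    next
      case False
      then have "(S'', l) \<noteq> (S, g)" by auto
      then show ?thesis using False z1[OF False] by (auto simp: fscale_def ys Rval indic_def)
    qed
  qed
  then show ?case using wN by simp
qed

lemma Pg_cover:
  fixes u :: "'g::{finite,ab_group_add}"
    and TC :: "'c::ab_group_add itself" and TD :: "'d::ab_group_add itself"
  shows "is_projective_cover k u (Pg k u g :: ('k::field, nat set \<times> 'g \<Rightarrow> 'k, 'g) comod)
                (kg (((+) u ^^ k) g) :: ('k, unit \<Rightarrow> 'k, 'g) comod) TC TD"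
  unfolding is_projective_cover_def
proof (intro conjI)
  show "comod_projective k u (Pg k u g :: ('k::field, nat set \<times> 'g \<Rightarrow> 'k, 'g) comod) TC TD" by (rule Pg_projective)
  show "is_comodule k u (kg (((+) u ^^ k) g) :: ('k, unit \<Rightarrow> 'k, 'g) comod)" by (rule kg_comodule)
  define h where "h = ((+) u ^^ k) g"
  define P where "P = (Pg k u g :: ('k::field, nat set \<times> 'g \<Rightarrow> 'k, 'g) comod)"
  define K where "K = (kg h :: ('k, unit \<Rightarrow> 'k, 'g) comod)"
  define \<pi> where "\<pi> x = (\<lambda>_::unit. x ({..<k}, g))" for x :: "nat set \<times> 'g \<Rightarrow> 'k"
  have carK: "car K = UNIV" by (simp add: K_def kg_def)
  have tc: "indic ({..<k}, g) \<in> car P"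
    by (auto simp: P_def car_Pg fspace_def Pset_def indic_def)
  have hom: "comod_hom k P K \<pi>"
    unfolding comod_hom_def
  proof (intro conjI ballI allI)
    fix x assume "x \<in> car P" then show "\<pi> x \<in> car K" by (simp add: carK)
  next
    fix x y :: "nat set \<times> 'g \<Rightarrow> 'k"
    show "\<pi> (x + y) = \<pi> x + \<pi> y" by (simp add: \<pi>_def fun_eq_iff)
  next
    fix a and x :: "nat set \<times> 'g \<Rightarrow> 'k"
    show "\<pi> (scl P a x) = scl K a (\<pi> x)" by (simp add: \<pi>_def fun_eq_iff P_def K_def scl_Pg kg_def fscale_def)
  next
    fix b :: "nat set \<times> 'g" and x assume b: "b \<in> abasis k" and x: "x \<in> car P"
    have fb: "fst b \<subseteq> {..<k}" using b by (cases b) auto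
    have "coact P b x ({..<k}, g) = (\<Sum>b0\<in>abasis k. x b0 * cop_coeff u b0 b ({..<k}, g))"
      by (simp add: P_def coact_Pg)
    also have "\<dots> = x ({..<k}, g) * cop_coeff u ({..<k}, g) b ({..<k}, g)"
    proof (subst sum_single[where a="({..<k}, g)"])
      show "finite (abasis k :: (nat set \<times> 'g) set)" by simp
      fix b0 :: "nat set \<times> 'g" assume b0: "b0 \<in> abasis k" "b0 \<noteq> ({..<k}, g)"
      have "cop_coeff u b0 b ({..<k}, g) = (0::'k)"
      proof (rule cop_zero, rule notI)
        assume "fst b \<union> fst ({..<k}, g) = fst b0 \<and> fst b \<inter> fst ({..<k}, g) = {} \<and>
            snd b = ((+) u ^^ card (fst ({..<k}, g))) (snd b0) \<and> snd ({..<k}, g) = snd b0"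
        then have "fst b \<union> {..<k} = fst b0" "g = snd b0" by auto
        moreover have "fst b0 \<subseteq> {..<k}" using b0(1) by (cases b0) auto
        ultimately have "b0 = ({..<k}, g)" by (cases b0) auto
        then show False using b0 by blast
      qed
      then show "x b0 * cop_coeff u b0 b ({..<k}, g) = 0" by simp
    qed simp
    also have "cop_coeff u ({..<k}, g) b ({..<k}, g) = (if b = ({}, h) then 1 else (0::'k))"
    proof (cases "b = ({}, h)")
      case True
      have "cop_coeff u ({..<k}, g) ({}, h) ({..<k}, g) = (1::'k)"
        by (rule cop_val[where d="({..<k}, g)" and c="({}, h)", simplified]) (simp add: h_def)
      then show ?thesis using True by simp
    next
      case False
      have "cop_coeff u ({..<k}, g) b ({..<k}, g) = (0::'k)"
      proof (rule cop_zero, rule notI)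
        assume "fst b \<union> fst ({..<k}, g) = fst ({..<k}, g) \<and> fst b \<inter> fst ({..<k}, g) = {} \<and>
            snd b = ((+) u ^^ card (fst ({..<k}, g))) (snd ({..<k}, g)) \<and> snd ({..<k}, g) = snd ({..<k}, g)"
        then have "fst b \<inter> {..<k} = {}" "snd b = h" by (auto simp: h_def)
        then have "b = ({}, h)" using fb by (cases b) auto
        then show False using False by blast
      qed
      then show ?thesis using False by simp
    qed
    finally have "coact P b x ({..<k}, g) = (if b = ({}, h) then x ({..<k}, g) else 0)" by simp
    then show "\<pi> (coact P b x) = coact K b (\<pi> x)"
      by (simp add: \<pi>_def K_def kg_def fun_eq_iff)
  qed
  have surj: "\<pi> ` car P = car K"
  proof
    show "\<pi> ` car P \<subseteq> car K" by (simp add: carK)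
    show "car K \<subseteq> \<pi> ` car P"
    proof
      fix w :: "unit \<Rightarrow> 'k" assume "w \<in> car K"
      have "fscale (w ()) (indic ({..<k}, g)) \<in> car P"
        using module.subspace_scale[OF mod_fscale subspace_fspace tc[unfolded P_def car_Pg]]
        by (simp add: P_def car_Pg)
      moreover have "\<pi> (fscale (w ()) (indic ({..<k}, g))) = w"
        by (simp add: \<pi>_def fscale_def indic_def fun_eq_iff)
      ultimately show "w \<in> \<pi> ` car P" by (metis image_eqI)
    qed
  qed
  have ess: "N = car P" if N: "subcomodule k P N \<and> \<pi> ` N = car K" for N
  proof
    show "N \<subseteq> car P" using N by (simp add: subcomodule_def)
    have "(\<lambda>_. 1) \<in> \<pi> ` N" using N carK by simp
    then obtain x where x1': "(\<lambda>_. 1) = \<pi> x" and xN: "x \<in> N" by (rule imageE)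
    have x: "x \<in> N" by (rule xN)
    have x1: "x ({..<k}, g) = 1" using fun_cong[OF x1', of "()"] by (simp add: \<pi>_def)
    have sub: "subcomodule k (Pg k u g :: ('k::field, nat set \<times> 'g \<Rightarrow> 'k, 'g) comod) N" using N by (simp add: P_def)
    have sN: "module.subspace fscale N" using sub by (simp add: subcomodule_def scl_Pg)
    show "car P \<subseteq> N"
    proof
      fix y assume y: "y \<in> car P"
      have "(\<Sum>S\<in>Pow {..<k}. fscale (y (S, g)) (indic (S, g))) \<in> N"
      proof (rule module.subspace_sum[OF mod_fscale sN])
        fix S assume "S \<in> Pow {..<k}"
        then have "indic (S, g) \<in> N" using Pg_delta_in[OF sub x(1) x1] by blast
        then show "fscale (y (S, g)) (indic (S, g)) \<in> N" by (rule module.subspace_scale[OF mod_fscale sN])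
      qed
      moreover have "(\<Sum>S\<in>Pow {..<k}. fscale (y (S, g)) (indic (S, g))) = y"
      proof
        fix d :: "nat set \<times> 'g"
        obtain S' l where ds: "d = (S', l)" by fastforce
        have "(\<Sum>S\<in>Pow {..<k}. fscale (y (S, g)) (indic (S, g))) d = (\<Sum>S\<in>Pow {..<k}. y (S, g) * indic (S, g) d)"
          unfolding sum_fun_apply by (simp add: fscale_def)
        also have "\<dots> = (if S' \<in> Pow {..<k} then y (S', g) * indic (S', g) d else 0)"
          by (rule sum_single) (auto simp: indic_def ds)
        also have "\<dots> = y d"
        proof (cases "S' \<subseteq> {..<k} \<and> l = g")
          case True then show ?thesis by (simp add: ds indic_def)
        next
          case False
          then have "d \<notin> Pset k g" by (auto simp: ds Pset_def)
          then have "y d = 0" using y unfolding P_def car_Pg fspace_def by blast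
          then show ?thesis using False by (auto simp: ds indic_def)
        qed
        finally show "(\<Sum>S\<in>Pow {..<k}. fscale (y (S, g)) (indic (S, g))) d = y d" .
      qed
      ultimately show "y \<in> N" by simp
    qed
  qed
  show "\<exists>\<pi>. comod_hom k (Pg k u g :: ('k::field, nat set \<times> 'g \<Rightarrow> 'k, 'g) comod) (kg (((+) u ^^ k) g) :: ('k, unit \<Rightarrow> 'k, 'g) comod) \<pi>
      \<and> \<pi> ` car (Pg k u g :: ('k::field, nat set \<times> 'g \<Rightarrow> 'k, 'g) comod) = car (kg (((+) u ^^ k) g) :: ('k, unit \<Rightarrow> 'k, 'g) comod)
      \<and> (\<forall>N. subcomodule k (Pg k u g :: ('k::field, nat set \<times> 'g \<Rightarrow> 'k, 'g) comod) N \<and> \<pi> ` N = car (kg (((+) u ^^ k) g) :: ('k, unit \<Rightarrow> 'k, 'g) comod)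
           \<longrightarrow> N = car (Pg k u g :: ('k::field, nat set \<times> 'g \<Rightarrow> 'k, 'g) comod))"
    using hom surj ess unfolding P_def K_def h_def by blast
qed


theorem theorem3p2:
  fixes k :: nat
    and u :: "'g::{finite, ab_group_add}"
    and act :: "'g \<Rightarrow> nat \<Rightarrow> nat \<Rightarrow> 'k::field_char_0"
    and TC :: "'c::ab_group_add itself" and TD :: "'d::ab_group_add itself"
  assumes alg_closed: "\<forall>p :: 'k poly. degree p > 0 \<longrightarrow> (\<exists>x. poly p x = 0)"
    and u_order2: "u \<noteq> 0" "u + u = 0"
    and act_unit: "\<forall>i<k. \<forall>j<k. act 0 i j = (if i = j then 1 else 0)"
    and act_mult: "\<forall>g h. \<forall>i<k. \<forall>j<k. act (g + h) i j = (\<Sum>l<k. act g i l * act h l j)"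
    and act_u: "\<forall>i<k. \<forall>j<k. act u i j = - (if i = j then 1 else 0)"
  shows
    "(\<forall>g. simple_comodule k u (kg g :: ('k, unit \<Rightarrow> 'k, 'g) comod))
     \<and> (\<forall>g h. comod_isomorphic k (kg g :: ('k, unit \<Rightarrow> 'k, 'g) comod) (kg h :: ('k, unit \<Rightarrow> 'k, 'g) comod) \<longrightarrow> g = h)
     \<and> (\<forall>C :: ('k, 'm::ab_group_add, 'g) comod. simple_comodule k u C \<longrightarrow>
          (\<exists>g. comod_isomorphic k C (kg g :: ('k, unit \<Rightarrow> 'k, 'g) comod)))
     \<and> (\<forall>g. is_projective_cover k u (Pg k u g :: ('k, nat set \<times> 'g \<Rightarrow> 'k, 'g) comod)
                (kg (((+) u ^^ k) g) :: ('k, unit \<Rightarrow> 'k, 'g) comod) TC TD)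
     \<and> (\<forall>g h. comod_isomorphic k
                (comod_tensor k act UNIV (kg g) UNIV (kg h) :: ('k, unit \<times> unit \<Rightarrow> 'k, 'g) comod)
                (kg (g + h) :: ('k, unit \<Rightarrow> 'k, 'g) comod))
     \<and> (\<forall>g h. comod_isomorphic k
                (comod_tensor k act {(S, l). S \<subseteq> {..<k} \<and> l = g} (Pg k u g) UNIV (kg h)
                   :: ('k, (nat set \<times> 'g) \<times> unit \<Rightarrow> 'k, 'g) comod)
                (Pg k u (g + h) :: ('k, nat set \<times> 'g \<Rightarrow> 'k, 'g) comod))"
proof (intro conjI allI impI)
  fix g :: 'g
  show "simple_comodule k u (kg g :: ('k, unit \<Rightarrow> 'k, 'g) comod)" by (rule kg_simple)
next
  fix g h :: 'g
  assume "comod_isomorphic k (kg g :: ('k, unit \<Rightarrow> 'k, 'g) comod) (kg h :: ('k, unit \<Rightarrow> 'k, 'g) comod)"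
  then show "g = h" by (rule kg_iso_eq)
next
  fix C :: "('k, 'm::ab_group_add, 'g) comod"
  assume sim: "simple_comodule k u C"
  then have "is_comodule k u C" by (simp add: simple_comodule_def)
  then interpret C: comodctx k u C by unfold_locales
  show "\<exists>g. comod_isomorphic k C (kg g :: ('k, unit \<Rightarrow> 'k, 'g) comod)" by (rule C.simple_iso[OF sim])
next
  fix g :: 'g
  show "is_projective_cover k u (Pg k u g :: ('k, nat set \<times> 'g \<Rightarrow> 'k, 'g) comod)
                (kg (((+) u ^^ k) g) :: ('k, unit \<Rightarrow> 'k, 'g) comod) TC TD" by (rule Pg_cover)
next
  fix g h :: 'g
  show "comod_isomorphic k
                (comod_tensor k act UNIV (kg g) UNIV (kg h) :: ('k, unit \<times> unit \<Rightarrow> 'k, 'g) comod)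
                (kg (g + h) :: ('k, unit \<Rightarrow> 'k, 'g) comod)" by (rule kg_tensor_iso)
next
  fix g h :: 'g
  show "comod_isomorphic k
                (comod_tensor k act {(S, l). S \<subseteq> {..<k} \<and> l = g} (Pg k u g) UNIV (kg h)
                   :: ('k, (nat set \<times> 'g) \<times> unit \<Rightarrow> 'k, 'g) comod)
                (Pg k u (g + h) :: ('k, nat set \<times> 'g \<Rightarrow> 'k, 'g) comod)" by (rule Pg_tensor_iso)
qed

end
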